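(* As $\lambda\to0$ with $\lambda\in\overline{\mathbb C^+}\setminus\{0\}$, $\Gamma(\lambda)^{-1}$ stays bounded if and only if $S\tilde DS$ is non-singular on $S\mathbb C^N$. In this case $$\Gamma(\lambda)^{-1}=[S\tilde DS]^{-1}+O(|g(\lambda)|^{-1})\qquad(\lambda\to0),$$ where $[S\tilde DS]^{-1}$ is the inverse on $S\mathbb C^N$ extended by $0$ on $P\mathbb C^N$, and there exist $\lambda_0>0$ and constants $C_\ell$ such that for all entries, all $\ell=0,1,2,\dots$ and $0<\lambda<\lambda_0$: $\big|\partial_\lambda^\ell[\Gamma(\lambda)^{-1}]_{jk}\big|\le C_\ell\lambda^{-\ell}$.
   Context: Fix $N\ge1$, distinct points $y_1,\dots,y_N\in\mathbb R^2$, $\alpha\in\mathbb R^N$. For $\lambda\in\overline{\mathbb C^+}\setminus\{0\}$: $\mathcal G_\lambda(x)=\frac i4H_0^{(1)}(\lambda|x|)$, $g(\lambda)=-\frac1{2\pi}\log(\lambda/2)+\frac i4-\frac{\gamma}{2\pi}$ ($\gamma$ Euler's constant, principal logarithm), $\Gamma(\lambda)$ the $N\times N$ matrix with $\Gamma(\lambda)_{jj}=\alpha_j-g(\lambda)$, $\Gamma(\lambda)_{jk}=-\mathcal G_\lambda(y_j-y_k)$ ($j\ne k$). $P$ is the orthogonal projection onto $\mathbb C(1,\dots,1)^t$, $S=I-P$; $\tilde D$ the real symmetric matrix with $\tilde D_{jj}=\alpha_j$, $\tilde D_{jk}=\frac1{2\pi}\log|y_j-y_k|$ ($j\ne k$).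 $O(h(\lambda))$ denotes a matrix whose norm is bounded by $C|h(\lambda)|$ for small $|\lambda|$. *)

theory Defs
  imports "HOL-Analysis.Analysis"
begin

definition besselJ0 :: "complex \<Rightarrow> complex" where
  "besselJ0 z = (\<Sum>m. (-1)^m * (z/2)^(2*m) / (of_nat (fact m))^2)"

definition besselY0 :: "complex \<Rightarrow> complex" where
  "besselY0 z = (2 / of_real pi) * ((Ln (z/2) + euler_mascheroni) * besselJ0 z
      + (\<Sum>m. (-1)^(m+1) * harm m * (z/2)^(2*m) / (of_nat (fact m))^2))"

definition hankel10 :: "complex \<Rightarrow> complex" where
  "hankel10 z = besselJ0 z + \<i> * besselY0 z"

definition greenG :: "complex \<Rightarrow> real^2 \<Rightarrow> complex" where
  "greenG lam x = (\<i>/4) * hankel10 (lam * of_real (norm x))"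

definition gfun :: "complex \<Rightarrow> complex" where
  "gfun lam = - (1/(2 * of_real pi)) * Ln (lam/2) + \<i>/4 - euler_mascheroni/(2 * of_real pi)"

definition GammaM :: "('n::finite \<Rightarrow> real^2) \<Rightarrow> ('n \<Rightarrow> real) \<Rightarrow> complex \<Rightarrow> complex^'n^'n" where
  "GammaM y \<alpha> lam = (\<chi> j k. if j = k then of_real (\<alpha> j) - gfun lam
                               else - greenG lam (y j - y k))"

definition Pm :: "complex^'n::finite^'n" where
  "Pm = (\<chi> j k. 1 / of_nat CARD('n))"

definition Sm :: "complex^'n::finite^'n" where
  "Sm = mat 1 - Pm"

definition Dtilde :: "('n::finite \<Rightarrow> real^2) \<Rightarrow> ('n \<Rightarrow> real) \<Rightarrow> complex^'n^'n" where
  "Dtilde y \<alpha> = (\<chi> j k. if j = k then of_real (\<alpha> j)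
                          else of_real (ln (dist (y j) (y k)) / (2*pi)))"

definition nonsing_on_S :: "complex^'n::finite^'n \<Rightarrow> bool" where
  "nonsing_on_S A \<longleftrightarrow> (\<forall>v. Sm *v v = v \<longrightarrow> A *v v = 0 \<longrightarrow> v = 0)"

text \<open>[A]^{-1}: inverse of A on S C^N, extended by 0 on P C^N (A = S D S).\<close>
definition inv_on_S :: "complex^'n::finite^'n \<Rightarrow> complex^'n^'n" where
  "inv_on_S A = (THE M. Sm ** M = M \<and> M ** Pm = 0 \<and> M ** A = Sm)"

definition rderiv :: "(real \<Rightarrow> complex) \<Rightarrow> real \<Rightarrow> complex" where
  "rderiv f t = vector_derivative f (at t)"

definition cuhp0 :: "complex set" where
  "cuhp0 = {z. Im z \<ge> 0 \<and> z \<noteq> 0}"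

end

theory Submission
  imports Defs "HOL-Complex_Analysis.Complex_Analysis"
begin

definition sm :: "complex \<Rightarrow> complex^'n::finite^'n \<Rightarrow> complex^'n^'n" where
  "sm c A = map_matrix ((*) c) A"

lemma sm_nth[simp]: "sm c A $ i $ j = c * A $ i $ j"
  by (simp add: sm_def)

lemma mm_add_r: "((A::complex^'n::finite^'n) + B) ** C = A ** C + B ** C"
  by (vector matrix_matrix_mult_def sum.distrib[symmetric] field_simps)
lemma mm_diff_r: "((A::complex^'n::finite^'n) - B) ** C = A ** C - B ** C"
  by (vector matrix_matrix_mult_def sum_subtractf[symmetric] field_simps)
lemma mm_diff_l: "(A::complex^'n::finite^'n) ** (B - C) = A ** B - A ** C"
  by (vector matrix_matrix_mult_def sum_subtractf[symmetric] field_simps)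
lemma sm_mult_l: "sm c (A::complex^'n::finite^'n) ** B = sm c (A ** B)"
  by (simp add: vec_eq_iff matrix_matrix_mult_def sum_distrib_left mult.assoc)
lemma sm_mult_r: "(A::complex^'n::finite^'n) ** sm c B = sm c (A ** B)"
  by (simp add: vec_eq_iff matrix_matrix_mult_def sum_distrib_left mult_ac)
lemma sm_sm: "sm a (sm b (A::complex^'n::finite^'n)) = sm (a*b) A"
  by (simp add: vec_eq_iff mult.assoc)
lemma sm_1[simp]: "sm 1 (A::complex^'n::finite^'n) = A"
  by (simp add: vec_eq_iff)
lemma sm_add: "sm c ((A::complex^'n::finite^'n) + B) = sm c A + sm c B"
  by (simp add: vec_eq_iff field_simps)
lemma sm_diff: "sm c ((A::complex^'n::finite^'n) - B) = sm c A - sm c B"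
  by (simp add: vec_eq_iff field_simps)
lemma sm_0[simp]: "sm c (0::complex^'n::finite^'n) = 0"
  by (simp add: vec_eq_iff)

definition m1 :: "complex^'n::finite^'n \<Rightarrow> real" where
  "m1 A = (\<Sum>i\<in>UNIV. \<Sum>j\<in>UNIV. cmod (A$i$j))"
definition v1 :: "complex^'n::finite \<Rightarrow> real" where
  "v1 x = (\<Sum>i\<in>UNIV. cmod (x$i))"

lemma m1_nonneg: "0 \<le> m1 A" by (simp add: m1_def sum_nonneg)
lemma v1_nonneg: "0 \<le> v1 x" by (simp add: v1_def sum_nonneg)

lemma m1_add: "m1 (A + B) \<le> m1 A + m1 B"
  unfolding m1_def sum.distrib[symmetric]
  by (intro sum_mono) (simp add: norm_triangle_ineq)
lemma m1_diff: "m1 (A - B) \<le> m1 A + m1 B"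
  unfolding m1_def sum.distrib[symmetric]
  by (intro sum_mono) (simp add: norm_triangle_ineq4)
lemma m1_minus_sym: "m1 (A - B) = m1 (B - A)"
  unfolding m1_def by (simp add: norm_minus_commute)
lemma m1_sm: "m1 (sm c A) = cmod c * m1 A"
  unfolding m1_def by (simp add: norm_mult sum_distrib_left)
lemma v1_add: "v1 (x + y) \<le> v1 x + v1 y"
  unfolding v1_def sum.distrib[symmetric]
  by (intro sum_mono) (simp add: norm_triangle_ineq)
lemma v1_diff: "v1 (x - y) \<le> v1 x + v1 y"
  unfolding v1_def sum.distrib[symmetric]
  by (intro sum_mono) (simp add: norm_triangle_ineq4)
lemma v1_scale: "v1 (c *s x) = cmod c * v1 x"
  unfolding v1_def by (simp add: norm_mult sum_distrib_left)

lemma m1_entry: "cmod (A$i$j) \<le> m1 A"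
proof -
  have "cmod (A$i$j) \<le> (\<Sum>j\<in>UNIV. cmod (A$i$j))"
    by (rule member_le_sum) auto
  also have "\<dots> \<le> m1 A" unfolding m1_def
    by (rule member_le_sum[where f="\<lambda>i. \<Sum>j\<in>UNIV. cmod (A$i$j)"]) (auto intro: sum_nonneg)
  finally show ?thesis .
qed

lemma m1_row: "(\<Sum>j\<in>UNIV. cmod (A$i$j)) \<le> m1 A"
  unfolding m1_def
  by (rule member_le_sum[where f="\<lambda>i. \<Sum>j\<in>UNIV. cmod (A$i$j)"]) (auto intro: sum_nonneg)

lemma m1_mult: "m1 ((A::complex^'n::finite^'n) ** B) \<le> m1 A * m1 B"
proof -
  have "m1 (A ** B) \<le> (\<Sum>i\<in>UNIV. \<Sum>k\<in>UNIV. \<Sum>j\<in>UNIV. cmod (A$i$j) * cmod (B$j$k))"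
    unfolding m1_def matrix_matrix_mult_def
    by (intro sum_mono, simp only: vec_lambda_beta, rule order_trans[OF norm_sum], simp add: norm_mult)
  also have "\<dots> = (\<Sum>i\<in>UNIV. \<Sum>j\<in>UNIV. cmod (A$i$j) * (\<Sum>k\<in>UNIV. cmod (B$j$k)))"
    by (rule sum.cong[OF refl], subst sum.swap, simp add: sum_distrib_left)
  also have "\<dots> \<le> (\<Sum>i\<in>UNIV. \<Sum>j\<in>UNIV. cmod (A$i$j) * m1 B)"
    by (intro sum_mono mult_left_mono m1_row) auto
  also have "\<dots> = m1 A * m1 B"
    by (simp add: m1_def sum_distrib_right)
  finally show ?thesis .
qed

lemma v1_entry: "cmod (x$j) \<le> v1 x"
  unfolding v1_def by (rule member_le_sum) auto

lemma v1_mult: "v1 ((A::complex^'n::finite^'n) *v x) \<le> m1 A * v1 x"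
proof -
  have "v1 (A *v x) \<le> (\<Sum>i\<in>UNIV. \<Sum>j\<in>UNIV. cmod (A$i$j) * cmod (x$j))"
    unfolding v1_def matrix_vector_mult_def
    by (intro sum_mono, simp only: vec_lambda_beta, rule order_trans[OF norm_sum], simp add: norm_mult)
  also have "\<dots> \<le> (\<Sum>i\<in>UNIV. \<Sum>j\<in>UNIV. cmod (A$i$j) * v1 x)"
    by (intro sum_mono mult_left_mono v1_entry norm_ge_zero)
  also have "\<dots> = m1 A * v1 x"
    by (simp add: m1_def sum_distrib_right)
  finally show ?thesis .
qed

lemma m1_mat: "m1 (mat c :: complex^'n::finite^'n) = of_nat CARD('n) * cmod c"
  unfolding m1_def by (simp add: mat_def if_distrib[of cmod] cong: if_cong)

lemma norm_le_m1: "norm (A::complex^'n::finite^'n) \<le> m1 A"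
proof -
  have "norm A \<le> (\<Sum>i\<in>UNIV. norm (A$i))"
    unfolding norm_vec_def[of A] by (rule L2_set_le_sum) auto
  also have "\<dots> \<le> (\<Sum>i\<in>UNIV. \<Sum>j\<in>UNIV. norm (A$i$j))"
  proof (intro sum_mono)
    fix i show "norm (A$i) \<le> (\<Sum>j\<in>UNIV. norm (A$i$j))"
      unfolding norm_vec_def[of "A$i"] by (rule L2_set_le_sum) auto
  qed
  finally show ?thesis by (simp add: m1_def)
qed

lemma m1_le_norm: "m1 (A::complex^'n::finite^'n) \<le> of_nat CARD('n) * of_nat CARD('n) * norm A"
proof -
  have "m1 A \<le> (\<Sum>i\<in>(UNIV::'n set). \<Sum>j\<in>(UNIV::'n set). norm A)"
    unfolding m1_def
    by (intro sum_mono) (rule order_trans[OF Finite_Cartesian_Product.norm_nth_le Finite_Cartesian_Product.norm_nth_le])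
  then show ?thesis by simp
qed

lemma card_ne0: "of_nat CARD('n::finite) \<noteq> (0::complex)" by simp

lemma mv_add_r: "((A::complex^'n::finite^'n) + B) *v x = A *v x + B *v x"
  by (simp add: matrix_vector_mult_add_rdistrib)
lemma mv_diff_r: "((A::complex^'n::finite^'n) - B) *v x = A *v x - B *v x"
  by (simp add: matrix_vector_mult_diff_rdistrib)
lemma mv_sm: "(sm c (A::complex^'n::finite^'n)) *v x = c *s (A *v x)"
  by (simp add: vec_eq_iff matrix_vector_mult_def sum_distrib_left mult.assoc)
lemma mv_scale: "(A::complex^'n::finite^'n) *v (c *s x) = c *s (A *v x)"
  by (simp add: vec_eq_iff matrix_vector_mult_def sum_distrib_left mult_ac)
lemma mv_add: "(A::complex^'n::finite^'n) *v (x + y) = A *v x + A *v y"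
  by (simp add: matrix_vector_right_distrib)

lemma P_idem: "Pm ** Pm = (Pm :: complex^'n::finite^'n)"
  by (simp add: vec_eq_iff matrix_matrix_mult_def Pm_def field_simps)
lemma S_P: "Sm ** Pm = (0 :: complex^'n::finite^'n)"
  by (simp add: Sm_def mm_diff_r P_idem)
lemma P_S: "Pm ** Sm = (0 :: complex^'n::finite^'n)"
  by (simp add: Sm_def mm_diff_l P_idem)
lemma S_idem: "Sm ** Sm = (Sm :: complex^'n::finite^'n)"
  by (simp add: Sm_def mm_diff_l mm_diff_r P_idem)
lemma S_plus_P: "Sm + Pm = (mat 1 :: complex^'n::finite^'n)"
  by (simp add: Sm_def)

lemma right_inv_imp:
  fixes A X :: "complex^'n::finite^'n"
  assumes "A ** X = mat 1"
  shows "invertible A \<and> matrix_inv A = X"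
proof -
  have XA: "X ** A = mat 1" using assms matrix_left_right_inverse by blast
  have inv: "invertible A" unfolding invertible_def by (rule exI[of _ X]) (simp add: assms XA)
  have mi: "A ** matrix_inv A = mat 1 \<and> matrix_inv A ** A = mat 1"
    unfolding matrix_inv_def by (rule someI[where x=X]) (simp add: assms XA)
  then have "matrix_inv A = matrix_inv A ** (A ** X)" using assms by simp
  also have "\<dots> = X" using mi by (simp add: matrix_mul_assoc)
  finally show ?thesis using inv by simp
qed

lemma inv_props:
  fixes A :: "complex^'n::finite^'n"
  assumes SA: "Sm ** A = A" and AS: "A ** Sm = A" and ns: "nonsing_on_S A"
  defines "Q \<equiv> inv_on_S A"
  shows "Sm ** Q = Q \<and> Q ** Pm = 0 \<and> Pm ** Q = 0 \<and> Q ** A = Sm \<and> A ** Q = Sm"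
proof -
  define B where "B = A + Pm"
  have AP: "A ** Pm = 0" by (metis AS S_P matrix_mul_assoc times0_right)
  have PA: "Pm ** A = 0" by (metis SA P_S matrix_mul_assoc times0_left)
  have "inj ((*v) B)"
  proof (rule injI)
    fix x z assume "B *v x = B *v z"
    then have h: "B *v (x - z) = 0" by (simp add: matrix_vector_mult_diff_distrib)
    define v where "v = x - z"
    have "Sm *v (B *v v) = 0" using h v_def by simp
    then have Av: "A *v v = 0"
      by (simp add: matrix_vector_mul_assoc B_def matrix_add_ldistrib SA S_P)
    have "Pm *v (B *v v) = 0" using h v_def by simp
    then have Pv: "Pm *v v = 0"
      by (simp add: matrix_vector_mul_assoc B_def matrix_add_ldistrib PA P_idem)
    have "Sm *v v = v" using Pv by (simp add: Sm_def mv_diff_r)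
    then have "v = 0" using ns Av unfolding nonsing_on_S_def by blast
    then show "x = z" using v_def by simp
  qed
  then obtain B' where "B' ** B = mat 1" using matrix_left_invertible_injective by blast
  then have B'B: "B' ** B = mat 1" and BB': "B ** B' = mat 1" using matrix_left_right_inverse by blast+
  have BP: "B ** Pm = Pm" by (simp add: B_def mm_add_r AP P_idem)
  have B'P: "B' ** Pm = Pm" by (metis BP B'B matrix_mul_assoc matrix_mul_lid)
  have PB: "Pm ** B = Pm" by (simp add: B_def matrix_add_ldistrib PA P_idem)
  have PB': "Pm ** B' = Pm" by (metis PB BB' matrix_mul_assoc matrix_mul_rid)
  define Q' where "Q' = Sm ** B'"
  have SQ: "Sm ** Q' = Q'" by (simp add: Q'_def matrix_mul_assoc S_idem)
  have QP: "Q' ** Pm = 0" by (simp add: Q'_def matrix_mul_assoc[symmetric] B'P S_P)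
  have PQ: "Pm ** Q' = 0" by (simp add: Q'_def matrix_mul_assoc P_S)
  have QA: "Q' ** A = Sm"
  proof -
    have "A = B - Pm" by (simp add: B_def)
    then have "Q' ** A = Q' ** B - Q' ** Pm" by (simp add: mm_diff_l)
    also have "\<dots> = Sm" using QP by (simp add: Q'_def matrix_mul_assoc[symmetric] B'B)
    finally show ?thesis .
  qed
  have B'eq: "B' = Q' + Pm"
    by (metis Q'_def PB' S_plus_P matrix_mul_lid mm_add_r)
  have AQ: "A ** Q' = Sm"
  proof -
    have "mat 1 = B ** B'" using BB' by simp
    also have "\<dots> = A ** Q' + Pm"
      by (simp add: B'eq B_def matrix_add_ldistrib mm_add_r AP PQ P_idem)
    finally show ?thesis by (simp add: Sm_def)
  qed
  have uniq: "M = Q'" if "Sm ** M = M \<and> M ** Pm = 0 \<and> M ** A = Sm" for M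
  proof -
    have "M ** B = Sm" using that by (simp add: B_def matrix_add_ldistrib)
    then have "M ** B ** B' = Sm ** B'" by simp
    then show ?thesis by (simp add: matrix_mul_assoc[symmetric] BB' Q'_def)
  qed
  have "inv_on_S A = Q'"
    unfolding inv_on_S_def
    by (rule the_equality, intro conjI SQ QP QA, rule uniq, assumption)
  then have "Q = Q'" using Q_def by simp
  then show ?thesis using SQ QP PQ QA AQ by blast
qed

lemma inv_both:
  fixes A :: "complex^'n::finite^'n"
  assumes "invertible A"
  shows "A ** matrix_inv A = mat 1 \<and> matrix_inv A ** A = mat 1"
proof -
  obtain X where "A ** X = mat 1 \<and> X ** A = mat 1" using assms unfolding invertible_def by blast
  then show ?thesis unfolding matrix_inv_def by (rule someI[where x=X])
qed

lemma m1_neg_diff: "m1 (- X - Y) \<le> m1 X + m1 Y"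
  unfolding m1_def sum.distrib[symmetric]
  by (intro sum_mono) (simp add: norm_triangle_ineq4 order_trans[OF norm_triangle_ineq4])

lemma real_lemma1: fixes y :: real
  shows "y \<le> a * x * n + b * (w * n) \<Longrightarrow> y \<le> n * (a * x + b * w)"
  by (simp add: algebra_simps)
lemma real_lemma2: fixes x :: real
  shows "x \<le> a * (p * q * x) + M * (e * x + a * ((d + e') * (p * q * x))) \<Longrightarrow> x \<le> x * (a * p * q + M * (e + a * (d + e') * p * q))"
  by (simp add: algebra_simps)

lemma ag2: fixes w :: "'a::ab_group_add" shows "w + e + (x - w) = e + x"
  by (simp add: algebra_simps)

lemma ag_lemma: fixes s :: "'a::ab_group_add"
  shows "s + p = i \<Longrightarrow> s + a + e - (x - (p - a)) = i + (e - x)"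
  by (simp add: algebra_simps)

lemma fwd_identity:
  fixes D E Q :: "complex^'n::finite^'n" and c :: complex
  assumes c: "c \<noteq> 0" and SQ: "Sm ** Q = Q" and PQ: "Pm ** Q = 0"
    and AQ: "(Sm ** D ** Sm) ** Q = Sm"
  defines "W \<equiv> Pm - Pm ** D ** Q"
  defines "Z \<equiv> Q - sm (1/c) W"
  defines "R \<equiv> E ** Q - sm (1/c) ((D + E) ** W)"
  shows "(D + E - sm c Pm) ** Z = mat 1 + R"
proof -
  have DQ: "D ** Q = Sm + Pm ** D ** Q"
  proof -
    have "D ** Q = mat 1 ** D ** Q" by simp
    also have "\<dots> = (Sm + Pm) ** D ** Q" by (simp add: S_plus_P)
    also have "\<dots> = Sm ** D ** Q + Pm ** D ** Q" by (simp add: mm_add_r)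
    also have "Sm ** D ** Q = Sm ** D ** Sm ** Q" by (metis SQ matrix_mul_assoc)
    also note AQ
    finally show ?thesis .
  qed
  have PW: "Pm ** W = W"
    by (simp add: W_def mm_diff_l matrix_mul_assoc P_idem)
  have "(D + E - sm c Pm) ** Z = (D + E - sm c Pm) ** Q - sm (1/c) ((D + E - sm c Pm) ** W)"
    by (simp add: Z_def mm_diff_l sm_mult_r)
  also have "(D + E - sm c Pm) ** Q = Sm + Pm ** D ** Q + E ** Q"
    by (simp add: mm_diff_r mm_add_r sm_mult_l PQ DQ)
  also have "sm (1/c) ((D + E - sm c Pm) ** W) = sm (1/c) ((D + E) ** W) - W"
    using c by (simp add: mm_diff_r sm_diff sm_mult_l sm_sm PW)
  finally have "(D + E - sm c Pm) ** Z = Sm + Pm ** D ** Q + E ** Q - (sm (1/c) ((D + E) ** W) - W)" .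
  also have "\<dots> = mat 1 + R"
    unfolding R_def W_def by (rule ag_lemma[OF S_plus_P])
  finally show ?thesis .
qed

lemma m1_mat1: "m1 (mat 1 :: complex^'n::finite^'n) = of_nat CARD('n)"
  using m1_mat[of 1] by simp

lemma neumann:
  fixes R :: "complex^'n::finite^'n"
  assumes "m1 R \<le> 1/2"
  shows "invertible (mat 1 + R) \<and> m1 (matrix_inv (mat 1 + R)) \<le> 2 * of_nat CARD('n)"
proof -
  have "inj ((*v) (mat 1 + R))"
  proof (rule injI)
    fix x z assume "(mat 1 + R) *v x = (mat 1 + R) *v z"
    then have h: "(mat 1 + R) *v (x - z) = 0" by (simp add: matrix_vector_mult_diff_distrib)
    then have "x - z = - (R *v (x - z))" by (simp add: mv_add_r eq_neg_iff_add_eq_0)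
    then have "v1 (x - z) = v1 (- (R *v (x - z)))" by (rule arg_cong)
    also have "\<dots> = v1 (R *v (x - z))" by (simp add: v1_def)
    also have "\<dots> \<le> m1 R * v1 (x - z)" by (rule v1_mult)
    also have "\<dots> \<le> 1/2 * v1 (x - z)" by (intro mult_right_mono assms v1_nonneg)
    finally have "v1 (x - z) \<le> 0" by simp
    then have "\<forall>i. cmod ((x - z) $ i) = 0"
      unfolding v1_def using sum_nonneg_eq_0_iff[of UNIV "\<lambda>i. cmod ((x - z) $ i)"]
      by (metis finite_class.finite_UNIV iso_tuple_UNIV_I norm_ge_zero order_antisym sum_nonneg)
    then show "x = z" by (simp add: vec_eq_iff)
  qed
  then obtain T where "T ** (mat 1 + R) = mat 1" using matrix_left_invertible_injective by blast
  then have T: "(mat 1 + R) ** T = mat 1" using matrix_left_right_inverse by blast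
  from right_inv_imp[OF T] have inv: "invertible (mat 1 + R)" and Teq: "matrix_inv (mat 1 + R) = T" by auto
  have "T = mat 1 - R ** T" using T by (simp add: mm_add_r algebra_simps)
  then have "m1 T = m1 (mat 1 - R ** T)" by (rule arg_cong)
  then have "m1 T \<le> m1 (mat 1 :: complex^'n^'n) + m1 (R ** T)" using m1_diff[of "mat 1" "R ** T"] by simp
  also have "\<dots> \<le> of_nat CARD('n) + m1 R * m1 T" using m1_mult[of R T] m1_mat1[where 'n='n] by linarith
  also have "\<dots> \<le> of_nat CARD('n) + 1/2 * m1 T" by (intro add_left_mono mult_right_mono assms m1_nonneg)
  finally have "m1 T \<le> 2 * of_nat CARD('n)" by simp
  then show ?thesis using inv Teq by simp
qed

lemma fwd_main:
  fixes D E Q :: "complex^'n::finite^'n" and c :: complex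
  assumes c: "c \<noteq> 0" and SQ: "Sm ** Q = Q" and PQ: "Pm ** Q = 0"
    and AQ: "(Sm ** D ** Sm) ** Q = Sm"
    and small: "m1 E * m1 Q + cmod (1/c) * ((m1 D + m1 E) * (m1 (Pm::complex^'n^'n) + m1 (Pm::complex^'n^'n) * m1 D * m1 Q)) \<le> 1/2"
  shows "invertible (D + E - sm c Pm)
     \<and> m1 (matrix_inv (D + E - sm c Pm) - Q) \<le> 2 * of_nat CARD('n) *
          (m1 Q * (m1 E * m1 Q + cmod (1/c) * ((m1 D + m1 E) * (m1 (Pm::complex^'n^'n) + m1 (Pm::complex^'n^'n) * m1 D * m1 Q)))
           + cmod (1/c) * (m1 (Pm::complex^'n^'n) + m1 (Pm::complex^'n^'n) * m1 D * m1 Q))"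
proof -
  define W where "W = Pm - Pm ** D ** Q"
  define Z where "Z = Q - sm (1/c) W"
  define R where "R = E ** Q - sm (1/c) ((D + E) ** W)"
  define G where "G = D + E - sm c Pm"
  have GZ: "G ** Z = mat 1 + R" unfolding G_def Z_def R_def W_def by (rule fwd_identity[OF c SQ PQ AQ])
  have mW: "m1 W \<le> m1 (Pm::complex^'n^'n) + m1 (Pm::complex^'n^'n) * m1 D * m1 Q"
  proof -
    have "m1 (Pm ** D ** Q) \<le> m1 (Pm::complex^'n^'n) * m1 D * m1 Q"
      by (rule order_trans[OF m1_mult mult_right_mono[OF m1_mult m1_nonneg]])
    then show ?thesis unfolding W_def using m1_diff[of Pm "Pm ** D ** Q"] by linarith
  qed
  have mR: "m1 R \<le> m1 E * m1 Q + cmod (1/c) * ((m1 D + m1 E) * (m1 (Pm::complex^'n^'n) + m1 (Pm::complex^'n^'n) * m1 D * m1 Q))"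
  proof -
    have "m1 R \<le> m1 (E ** Q) + m1 (sm (1/c) ((D + E) ** W))" unfolding R_def by (rule m1_diff)
    also have "\<dots> \<le> m1 E * m1 Q + cmod (1/c) * ((m1 D + m1 E) * m1 W)"
    proof -
      have "m1 ((D+E)**W) \<le> (m1 D + m1 E) * m1 W"
        by (rule order_trans[OF m1_mult mult_right_mono[OF m1_add m1_nonneg]])
      then have "m1 (sm (1/c) ((D+E)**W)) \<le> cmod(1/c) * ((m1 D + m1 E) * m1 W)"
        unfolding m1_sm by (rule mult_left_mono) simp
      with m1_mult[of E Q] show ?thesis by linarith
    qed
    also have "\<dots> \<le> m1 E * m1 Q + cmod (1/c) * ((m1 D + m1 E) * (m1 (Pm::complex^'n^'n) + m1 (Pm::complex^'n^'n) * m1 D * m1 Q))"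
      using mW by (intro add_left_mono mult_left_mono) (auto intro: add_nonneg_nonneg m1_nonneg)
    finally show ?thesis .
  qed
  then have "m1 R \<le> 1/2" using small by linarith
  from neumann[OF this] obtain T where inv1: "invertible (mat 1 + R)" and T: "T = matrix_inv (mat 1 + R)"
     and mT: "m1 T \<le> 2 * of_nat CARD('n)" by blast
  have T1: "(mat 1 + R) ** T = mat 1"
    using inv_both[OF inv1] T by simp
  have "G ** (Z ** T) = mat 1" by (simp add: matrix_mul_assoc GZ T1)
  from right_inv_imp[OF this] have invG: "invertible G" and Ginv: "matrix_inv G = Z ** T" by auto
  have Teq: "T = mat 1 - R ** T" using T1 by (simp add: mm_add_r algebra_simps)
  have "Z ** T - Q = - (Q ** R ** T) - sm (1/c) (W ** T)"
  proof -
    have "Z ** T = Q ** T - sm (1/c) (W ** T)" by (simp add: Z_def mm_diff_r sm_mult_l)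
    also have "Q ** T = Q - Q ** R ** T"
      by (subst Teq) (simp add: mm_diff_l matrix_mul_assoc)
    finally show ?thesis by simp
  qed
  then have "m1 (Z ** T - Q) \<le> m1 (Q ** R ** T) + m1 (sm (1/c) (W ** T))"
    by (simp add: m1_neg_diff)
  also have "\<dots> \<le> m1 Q * m1 R * m1 T + cmod (1/c) * (m1 W * m1 T)"
  proof -
    have "m1 (Q ** R ** T) \<le> m1 Q * m1 R * m1 T"
      by (rule order_trans[OF m1_mult mult_right_mono[OF m1_mult m1_nonneg]])
    moreover have "m1 (sm (1/c) (W ** T)) \<le> cmod (1/c) * (m1 W * m1 T)"
      unfolding m1_sm by (rule mult_left_mono[OF m1_mult]) simp
    ultimately show ?thesis by linarith
  qed
  also have "\<dots> \<le> m1 Q * (m1 E * m1 Q + cmod (1/c) * ((m1 D + m1 E) * (m1 (Pm::complex^'n^'n) + m1 (Pm::complex^'n^'n) * m1 D * m1 Q))) * (2 * of_nat CARD('n))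
      + cmod (1/c) * ((m1 (Pm::complex^'n^'n) + m1 (Pm::complex^'n^'n) * m1 D * m1 Q) * (2 * of_nat CARD('n)))"
  proof -
    let ?X = "m1 E * m1 Q + cmod (1/c) * ((m1 D + m1 E) * (m1 (Pm::complex^'n^'n) + m1 (Pm::complex^'n^'n) * m1 D * m1 Q))"
    have X0: "0 \<le> ?X" using mR m1_nonneg[of R] by linarith
    have a1: "m1 Q * m1 R \<le> m1 Q * ?X" by (rule mult_left_mono[OF mR m1_nonneg])
    have a2: "m1 Q * m1 R * m1 T \<le> m1 Q * ?X * (2 * of_nat CARD('n))"
      by (rule mult_mono[OF a1 mT]) (auto intro: mult_nonneg_nonneg X0 m1_nonneg)
    have a3: "m1 W * m1 T \<le> (m1 (Pm::complex^'n^'n) + m1 (Pm::complex^'n^'n) * m1 D * m1 Q) * (2 * of_nat CARD('n))"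
      by (rule mult_mono[OF mW mT]) (auto intro: m1_nonneg add_nonneg_nonneg mult_nonneg_nonneg)
    have a4: "cmod (1/c) * (m1 W * m1 T) \<le> cmod (1/c) * ((m1 (Pm::complex^'n^'n) + m1 (Pm::complex^'n^'n) * m1 D * m1 Q) * (2 * of_nat CARD('n)))"
      by (rule mult_left_mono[OF a3]) simp
    from a2 a4 show ?thesis by linarith
  qed
  finally have fin: "m1 (Z ** T - Q) \<le> m1 Q * (m1 E * m1 Q + cmod (1/c) * ((m1 D + m1 E) * (m1 (Pm::complex^'n^'n) + m1 (Pm::complex^'n^'n) * m1 D * m1 Q))) * (2 * of_nat CARD('n))
      + cmod (1/c) * ((m1 (Pm::complex^'n^'n) + m1 (Pm::complex^'n^'n) * m1 D * m1 Q) * (2 * of_nat CARD('n)))" .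
  have "m1 (matrix_inv G - Q) \<le> 2 * of_nat CARD('n) *
          (m1 Q * (m1 E * m1 Q + cmod (1/c) * ((m1 D + m1 E) * (m1 (Pm::complex^'n^'n) + m1 (Pm::complex^'n^'n) * m1 D * m1 Q)))
           + cmod (1/c) * (m1 (Pm::complex^'n^'n) + m1 (Pm::complex^'n^'n) * m1 D * m1 Q))"
    unfolding Ginv by (rule real_lemma1[OF fin])
  then show ?thesis using invG unfolding G_def by blast
qed

lemma bwd_main:
  fixes D E :: "complex^'n::finite^'n" and c :: complex and v :: "complex^'n"
  assumes c: "c \<noteq> 0" and Sv: "Sm *v v = v" and Av: "(Sm ** D ** Sm) *v v = 0"
    and inv: "invertible (D + E - sm c Pm)"
  shows "v1 v \<le> v1 v * (cmod (1/c) * m1 (Pm::complex^'n^'n) * m1 D + m1 (matrix_inv (D + E - sm c Pm)) *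
           (m1 E + cmod (1/c) * (m1 D + m1 E) * m1 (Pm::complex^'n^'n) * m1 D))"
proof -
  define G where "G = D + E - sm c Pm"
  define w where "w = Pm *v (D *v v)"
  define u where "u = v + (1/c) *s w"
  have Pv: "Pm *v v = 0"
  proof -
    have "Pm *v v = Pm *v (Sm *v v)" using Sv by simp
    also have "\<dots> = 0" by (simp add: matrix_vector_mul_assoc P_S)
    finally show ?thesis .
  qed
  have SDv: "Sm *v (D *v v) = 0"
  proof -
    have "Sm *v (D *v v) = Sm *v (D *v (Sm *v v))" using Sv by simp
    also have "\<dots> = (Sm ** D ** Sm) *v v" by (simp add: matrix_vector_mul_assoc matrix_mul_assoc)
    finally show ?thesis using Av by simp
  qed
  have Dv: "D *v v = w"
  proof -
    have "D *v v = (Sm + Pm) *v (D *v v)" by (simp add: S_plus_P)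
    also have "\<dots> = w" by (simp add: mv_add_r SDv w_def)
    finally show ?thesis .
  qed
  have Pw: "Pm *v w = w" by (simp add: w_def matrix_vector_mul_assoc matrix_mul_assoc P_idem)
  have Gv: "G *v v = w + E *v v" unfolding G_def by (simp add: mv_add_r mv_diff_r mv_sm Pv Dv)
  have Gw: "G *v w = (D + E) *v w - c *s w" unfolding G_def by (simp add: mv_diff_r mv_sm Pw)
  have "G *v u = G *v v + (1/c) *s (G *v w)" by (simp add: u_def mv_add mv_scale)
  also have "\<dots> = E *v v + (1/c) *s ((D + E) *v w)"
  proof -
    have "(1/c) *s (c *s w) = w" using c by (simp add: vector_smult_assoc)
    then have "(1/c) *s ((D + E) *v w - c *s w) = (1/c) *s ((D + E) *v w) - w"
      by (simp add: vector_ssub_ldistrib)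
    then show ?thesis unfolding Gv Gw by (simp add: ag2)
  qed
  finally have Gu: "G *v u = E *v v + (1/c) *s ((D + E) *v w)" .
  have vw: "v1 w \<le> m1 (Pm::complex^'n^'n) * m1 D * v1 v"
  proof -
    have "v1 w \<le> m1 (Pm::complex^'n^'n) * v1 (D *v v)" unfolding w_def by (rule v1_mult)
    also have "\<dots> \<le> m1 (Pm::complex^'n^'n) * (m1 D * v1 v)" by (rule mult_left_mono[OF v1_mult m1_nonneg])
    finally show ?thesis by (simp add: mult.assoc)
  qed
  have "v1 (G *v u) \<le> m1 E * v1 v + cmod (1/c) * ((m1 D + m1 E) * v1 w)"
  proof -
    have "v1 (G *v u) \<le> v1 (E *v v) + cmod (1/c) * v1 ((D + E) *v w)"
      unfolding Gu using v1_add[of "E *v v" "(1/c) *s ((D+E) *v w)"] v1_scale[of "1/c" "(D+E) *v w"] by linarith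
    moreover have "v1 ((D + E) *v w) \<le> (m1 D + m1 E) * v1 w"
      by (rule order_trans[OF v1_mult mult_right_mono[OF m1_add v1_nonneg]])
    then have "cmod (1/c) * v1 ((D + E) *v w) \<le> cmod (1/c) * ((m1 D + m1 E) * v1 w)"
      by (rule mult_left_mono) simp
    ultimately show ?thesis using v1_mult[of E v] by linarith
  qed
  also have "\<dots> \<le> m1 E * v1 v + cmod (1/c) * ((m1 D + m1 E) * (m1 (Pm::complex^'n^'n) * m1 D * v1 v))"
    using vw by (intro add_left_mono mult_left_mono) (auto intro: add_nonneg_nonneg m1_nonneg)
  finally have Gub: "v1 (G *v u) \<le> m1 E * v1 v + cmod (1/c) * ((m1 D + m1 E) * (m1 (Pm::complex^'n^'n) * m1 D * v1 v))" .
  have GiG: "matrix_inv G ** G = mat 1"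
    using inv_both[OF inv] unfolding G_def by simp
  have "v1 u = v1 (matrix_inv G *v (G *v u))" by (simp add: matrix_vector_mul_assoc GiG)
  also have "\<dots> \<le> m1 (matrix_inv G) * v1 (G *v u)" by (rule v1_mult)
  also have "\<dots> \<le> m1 (matrix_inv G) * (m1 E * v1 v + cmod (1/c) * ((m1 D + m1 E) * (m1 (Pm::complex^'n^'n) * m1 D * v1 v)))"
    by (intro mult_left_mono Gub m1_nonneg)
  finally have ub: "v1 u \<le> \<dots>" .
  have "v = u - (1/c) *s w" by (simp add: u_def)
  then have "v1 v = v1 (u - (1/c) *s w)" by (rule arg_cong)
  then have "v1 v \<le> v1 u + cmod (1/c) * v1 w" using v1_diff[of u "(1/c) *s w"] v1_scale[of "1/c" w] by simp
  also have "\<dots> \<le> v1 u + cmod (1/c) * (m1 (Pm::complex^'n^'n) * m1 D * v1 v)"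
    by (intro add_left_mono mult_left_mono vw) auto
  finally have "v1 v \<le> v1 u + cmod (1/c) * (m1 (Pm::complex^'n^'n) * m1 D * v1 v)" .
  with ub have "v1 v \<le> cmod (1/c) * (m1 (Pm::complex^'n^'n) * m1 D * v1 v) + m1 (matrix_inv G) * (m1 E * v1 v + cmod (1/c) * ((m1 D + m1 E) * (m1 (Pm::complex^'n^'n) * m1 D * v1 v)))"
    by linarith
  then show ?thesis unfolding G_def by (rule real_lemma2)
qed

definition a1 :: "nat \<Rightarrow> complex" where "a1 m = (-1)^m / (of_nat (fact m))^2"
definition a2 :: "nat \<Rightarrow> complex" where "a2 m = (-1)^(m+1) * harm m / (of_nat (fact m))^2"
definition F1 :: "complex \<Rightarrow> complex" where "F1 w = (\<Sum>m. a1 m * w^m)"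
definition F2 :: "complex \<Rightarrow> complex" where "F2 w = (\<Sum>m. a2 m * w^m)"

lemma fact_le_sq: "(fact m :: real) \<le> (fact m)^2"
proof -
  have "(fact m::real) * 1 \<le> fact m * fact m" by (rule mult_left_mono) auto
  then show ?thesis by (simp add: power2_eq_square)
qed

lemma a1_bound: "cmod (a1 m) \<le> 1 / fact m"
proof -
  have "cmod (a1 m) = 1 / (fact m)^2" by (simp add: a1_def norm_divide norm_power)
  also have "\<dots> \<le> 1 / fact m" by (rule divide_left_mono[OF fact_le_sq]) auto
  finally show ?thesis .
qed

lemma harm_le: "harm n \<le> (real n)"
proof -
  have "harm n = (\<Sum>k=1..n. inverse (real k))" by (simp add: harm_def)
  also have "\<dots> \<le> (\<Sum>k=1..n. 1)" by (intro sum_mono) (auto simp: inverse_le_1_iff)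
  finally show ?thesis by simp
qed

lemma a2_bound: "cmod (a2 m) \<le> 1 / fact m"
proof -
  have hf: "harm m \<le> (fact m :: real)"
  proof -
    have "harm m \<le> real m" by (rule harm_le)
    also have "real m \<le> fact m" by (metis fact_ge_self of_nat_fact of_nat_le_iff)
    finally show ?thesis .
  qed
  have "cmod (a2 m) = harm m / (fact m :: real)^2" by (simp add: a2_def norm_divide norm_power norm_mult norm_harm)
  also have "\<dots> \<le> fact m / (fact m :: real)^2"
    by (rule divide_right_mono[OF hf]) auto
  also have "\<dots> = 1 / fact m" by (simp add: power2_eq_square)
  finally show ?thesis .
qed

lemma ps_summable_norm:
  fixes a :: "nat \<Rightarrow> complex"
  assumes B: "\<And>m. cmod (a m) \<le> 1 / fact m"
  shows "summable (\<lambda>m. norm (a m * y^m))"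
proof (rule summable_comparison_test[where g="\<lambda>m. inverse (fact m) * cmod y ^ m"])
  show "\<exists>N. \<forall>n\<ge>N. norm (norm (a n * y^n)) \<le> inverse (fact n) * cmod y ^ n"
  proof (intro exI allI impI)
    fix n :: nat
    have "norm (norm (a n * y^n)) = cmod (a n) * cmod y ^ n" by (simp add: norm_mult norm_power)
    also have "\<dots> \<le> inverse (fact n) * cmod y ^ n"
      using B[of n] by (intro mult_right_mono) (auto simp: divide_inverse)
    finally show "norm (norm (a n * y^n)) \<le> inverse (fact n) * cmod y ^ n" .
  qed
  show "summable (\<lambda>m. inverse (fact m) * cmod y ^ m)" by (rule summable_exp)
qed

lemma ps_summable:
  fixes a :: "nat \<Rightarrow> complex"
  assumes B: "\<And>m. cmod (a m) \<le> 1 / fact m"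
  shows "summable (\<lambda>m. a m * y^m)"
  by (rule summable_norm_cancel[OF ps_summable_norm[OF B]])

lemma ps_holo:
  fixes a :: "nat \<Rightarrow> complex"
  assumes B: "\<And>m. cmod (a m) \<le> 1 / fact m"
  shows "(\<lambda>w. \<Sum>m. a m * w^m) holomorphic_on S"
proof -
  have "\<And>w. ((\<lambda>w. \<Sum>m. a m * w^m) has_field_derivative (\<Sum>m. diffs a m * w^m)) (at w)"
    by (rule termdiffs_strong_converges_everywhere) (rule ps_summable[OF B])
  then show ?thesis
    unfolding holomorphic_on_def field_differentiable_def
    using has_field_derivative_at_within by blast
qed

lemma exp1_sum: "(\<Sum>n. inverse (fact n :: real)) = exp 1"
proof -
  have "(\<lambda>n. inverse (fact n :: real)) sums exp 1"
    using exp_converges[of "1::real"] by (simp add: divide_inverse)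
  then show ?thesis by (rule sums_unique[symmetric])
qed

lemma ps_small:
  fixes a :: "nat \<Rightarrow> complex"
  assumes B: "\<And>m. cmod (a m) \<le> 1 / fact m" and w: "cmod w \<le> 1"
  shows "cmod ((\<Sum>m. a m * w^m) - a 0) \<le> exp 1 * cmod w"
proof -
  have s: "summable (\<lambda>m. a m * w^m)" by (rule ps_summable[OF B])
  have B': "cmod (a (Suc m)) \<le> 1 / fact m" for m
  proof -
    have "cmod (a (Suc m)) \<le> 1 / fact (Suc m)" by (rule B)
    also have "\<dots> \<le> 1 / fact m" by (rule divide_left_mono) (auto intro: fact_mono)
    finally show ?thesis .
  qed
  have s2: "summable (\<lambda>m. a (Suc m) * w^m)" by (rule ps_summable[OF B'])
  have sn: "summable (\<lambda>m. norm (a (Suc m) * w^m))" by (rule ps_summable_norm[OF B'])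
  have "(\<Sum>m. a m * w^m) - a 0 = (\<Sum>m. a (Suc m) * w^(Suc m))" using suminf_split_head[OF s] by simp
  also have "\<dots> = (\<Sum>m. w * (a (Suc m) * w^m))" by (simp add: mult_ac)
  also have "\<dots> = w * (\<Sum>m. a (Suc m) * w^m)" by (rule suminf_mult[OF s2])
  finally have eq: "(\<Sum>m. a m * w^m) - a 0 = w * (\<Sum>m. a (Suc m) * w^m)" .
  have "norm (\<Sum>m. a (Suc m) * w^m) \<le> (\<Sum>m. norm (a (Suc m) * w^m))" by (rule summable_norm[OF sn])
  also have "\<dots> \<le> (\<Sum>m. inverse (fact m))"
  proof (rule suminf_le[OF _ sn])
    fix m
    have "norm (a (Suc m) * w^m) = cmod (a (Suc m)) * cmod w ^ m" by (simp add: norm_mult norm_power)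
    also have "\<dots> \<le> (1 / fact m) * 1"
      by (intro mult_mono B' power_le_one w) auto
    finally show "norm (a (Suc m) * w^m) \<le> inverse (fact m)" by (simp add: divide_inverse)
  next
    show "summable (\<lambda>m. inverse (fact m :: real))" using summable_exp[of "1::real"] by simp
  qed
  also have "\<dots> = exp 1" by (rule exp1_sum)
  finally have "norm (\<Sum>m. a (Suc m) * w^m) \<le> exp 1" .
  then show ?thesis unfolding eq norm_mult
    by (metis mult.commute mult_left_mono norm_ge_zero)
qed

lemma F1_small: "cmod w \<le> 1 \<Longrightarrow> cmod (F1 w - 1) \<le> exp 1 * cmod w"
  using ps_small[of a1 w, OF a1_bound] by (simp add: F1_def a1_def)

lemma F2_small: "cmod w \<le> 1 \<Longrightarrow> cmod (F2 w) \<le> exp 1 * cmod w"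
  using ps_small[of a2 w, OF a2_bound] by (simp add: F2_def a2_def harm_expand)

lemma F1_holo: "F1 holomorphic_on UNIV"
  unfolding F1_def[abs_def] by (rule ps_holo[OF a1_bound])
lemma F2_holo: "F2 holomorphic_on UNIV"
  unfolding F2_def[abs_def] by (rule ps_holo[OF a2_bound])

lemma F1_holo'[holomorphic_intros]: "f holomorphic_on S \<Longrightarrow> (\<lambda>z. F1 (f z)) holomorphic_on S"
  using holomorphic_on_compose[of f S F1] holomorphic_on_subset[OF F1_holo] by (auto simp: o_def)
lemma F2_holo'[holomorphic_intros]: "f holomorphic_on S \<Longrightarrow> (\<lambda>z. F2 (f z)) holomorphic_on S"
  using holomorphic_on_compose[of f S F2] holomorphic_on_subset[OF F2_holo] by (auto simp: o_def)

lemma besselJ0_F1: "besselJ0 z = F1 ((z/2)^2)"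
  unfolding besselJ0_def F1_def a1_def
  by (intro arg_cong[where f=suminf] ext) (simp add: power_mult)

lemma besselY0_F: "besselY0 z = (2 / of_real pi) * ((Ln (z/2) + euler_mascheroni) * F1 ((z/2)^2) + F2 ((z/2)^2))"
  unfolding besselY0_def besselJ0_F1 F2_def a2_def
  by (intro arg_cong[where f="\<lambda>s. (2 / of_real pi) * ((Ln (z/2) + euler_mascheroni) * F1 ((z/2)^2) + s)"]
        arg_cong[where f=suminf] ext) (simp add: power_mult)

definition Eent :: "real \<Rightarrow> complex \<Rightarrow> complex" where
  "Eent r lam = (F1 ((lam * of_real r / 2)^2) - 1) *
      (- (\<i>/4) + (Ln (lam/2) + of_real (ln r) + euler_mascheroni) / (2 * of_real pi))
    + F2 ((lam * of_real r / 2)^2) / (2 * of_real pi)"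

lemma green_entry:
  assumes r: "r > 0" and x: "norm x = r" and lam: "lam \<noteq> 0"
  shows "- greenG lam x = of_real (ln r / (2*pi)) + Eent r lam - gfun lam"
proof -
  have z: "lam * of_real r / 2 = of_real r * (lam/2)" by simp
  have L: "Ln (lam * of_real r / 2) = of_real (ln r) + Ln (lam/2)"
    unfolding z using Ln_times_of_real[of r "lam/2"] Ln_of_real[OF r] r lam by simp
  define J where "J = F1 ((lam * of_real r / 2)^2)"
  define H where "H = F2 ((lam * of_real r / 2)^2)"
  define LL where "LL = Ln (lam/2)"
  have pi0: "(of_real pi :: complex) \<noteq> 0" by simp
  have "- greenG lam x = - ((\<i>/4) * (J + \<i> * ((2 / of_real pi) * ((of_real (ln r) + LL + euler_mascheroni) * J + H))))"
    unfolding greenG_def hankel10_def besselJ0_F1 besselY0_F x L J_def H_def LL_def by simp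
  also have "\<dots> = of_real (ln r / (2*pi)) + ((J - 1) * (- (\<i>/4) + (LL + of_real (ln r) + euler_mascheroni) / (2 * of_real pi)) + H / (2 * of_real pi))
       - (- (1/(2 * of_real pi)) * LL + \<i>/4 - euler_mascheroni/(2 * of_real pi))"
    using pi0 by (simp add: field_simps)
  finally show ?thesis unfolding Eent_def gfun_def J_def H_def LL_def .
qed

definition Emat :: "('n::finite \<Rightarrow> real^2) \<Rightarrow> complex \<Rightarrow> complex^'n^'n" where
  "Emat y lam = (\<chi> j k. if j = k then 0 else Eent (dist (y j) (y k)) lam)"

lemma Gamma_decomp:
  fixes y :: "'n::finite \<Rightarrow> real^2"
  assumes y: "inj y" and lam: "lam \<noteq> 0"
  shows "GammaM y \<alpha> lam = Dtilde y \<alpha> + Emat y lam - sm (gfun lam * of_nat CARD('n)) Pm"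
proof -
  have N: "(of_nat CARD('n) :: complex) \<noteq> 0" by simp
  have "GammaM y \<alpha> lam $ j $ k = (Dtilde y \<alpha> + Emat y lam - sm (gfun lam * of_nat CARD('n)) Pm) $ j $ k" for j k
  proof (cases "j = k")
    case True then show ?thesis using N by (simp add: GammaM_def Dtilde_def Emat_def Pm_def)
  next
    case False
    then have "y j \<noteq> y k" using y by (meson injD)
    then have r: "dist (y j) (y k) > 0" by simp
    have "GammaM y \<alpha> lam $ j $ k = - greenG lam (y j - y k)" using False by (simp add: GammaM_def)
    also have "\<dots> = of_real (ln (dist (y j) (y k)) / (2*pi)) + Eent (dist (y j) (y k)) lam - gfun lam"
      by (rule green_entry[OF r _ lam]) (simp add: dist_norm)
    finally show ?thesis using False N by (simp add: Dtilde_def Emat_def Pm_def)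
  qed
  then show ?thesis by (simp add: vec_eq_iff)
qed

lemma rev_tri: fixes a :: "'a::real_normed_vector"
  shows "norm a - norm b - norm c \<le> norm (a + b - c)"
proof -
  have "norm a \<le> norm (a + b - c) + norm (c - b)" using norm_triangle_ineq[of "a+b-c" "c-b"] by simp
  moreover have "norm (c - b) \<le> norm c + norm b" by (rule norm_triangle_ineq4)
  ultimately show ?thesis by linarith
qed

lemma fwd_tri: fixes a :: "'a::real_normed_vector"
  shows "norm (a + b - c) \<le> norm a + norm b + norm c"
  using norm_triangle_ineq[of a b] norm_triangle_ineq4[of "a+b" c] by linarith

lemma fwd_tri3: fixes a :: "'a::real_normed_vector"
  shows "norm (a + b + c) \<le> norm a + norm b + norm c"
  using norm_triangle_ineq[of a b] norm_triangle_ineq[of "a+b" c] by linarith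

lemma Ln_norm_bound: "z \<noteq> 0 \<Longrightarrow> cmod (Ln z) \<le> \<bar>ln (cmod z)\<bar> + pi"
proof -
  assume z: "z \<noteq> 0"
  have "\<bar>Im (Ln z)\<bar> \<le> pi" using mpi_less_Im_Ln[OF z] Im_Ln_le_pi[OF z] by linarith
  then show ?thesis using cmod_le[of "Ln z"] Re_Ln[OF z] by linarith
qed

lemma ln_small: fixes \<rho> :: real assumes "0 < \<rho>" "\<rho> \<le> 1" shows "\<bar>ln (\<rho>/2)\<bar> \<le> 1 + 1/\<rho>"
proof -
  have a: "ln (\<rho>/2) = ln \<rho> - ln 2" using assms by (simp add: ln_div)
  have b: "ln \<rho> \<le> 0" using assms by simp
  have c: "ln 2 < (1::real)" by (rule ln_2_less_1)
  have c2: "0 < ln (2::real)" by simp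
  have d: "ln (1/\<rho>) \<le> 1/\<rho> - 1" using assms by (intro ln_le_minus_one) simp
  have e: "ln (1/\<rho>) = - ln \<rho>" using assms by (simp add: ln_div)
  show ?thesis using a b c c2 d e by linarith
qed

definition Bc :: "real \<Rightarrow> real" where
  "Bc r = pi + \<bar>ln r\<bar> + cmod (euler_mascheroni :: complex) + 2"

lemma Eent_pt:
  assumes r: "r > 0" and lam: "lam \<noteq> 0" and l1: "cmod lam \<le> 1" and lr: "cmod lam * r \<le> 1"
  shows "cmod (Eent r lam) * cmod (gfun lam) \<le> exp 1 * (r^2/4) * (Bc r + 2)^2"
proof -
  define \<rho> where "\<rho> = cmod lam"
  have \<rho>0: "0 < \<rho>" using lam \<rho>_def by simp
  define ll where "ll = \<bar>ln (\<rho>/2)\<bar>"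
  define q where "q = (lam * of_real r / 2)^2"
  define cq where "cq = (\<rho> * r / 2)^2"
  define LL where "LL = Ln (lam / 2)"
  define ceg where "ceg = cmod (euler_mascheroni :: complex)"
  define X where "X = ll + Bc r"
  have cq: "cmod q = cq" unfolding q_def cq_def \<rho>_def using r by (simp add: norm_mult norm_power norm_divide)
  have cq1: "cq \<le> 1"
  proof -
    have "\<rho> * r / 2 \<le> 1" using lr \<rho>_def by simp
    moreover have "0 \<le> \<rho> * r / 2" using \<rho>0 r by simp
    ultimately show ?thesis unfolding cq_def by (simp add: power_le_one)
  qed
  have cq0: "0 \<le> cq" unfolding cq_def by simp
  have LLb: "cmod LL \<le> ll + pi"
    unfolding LL_def ll_def \<rho>_def using Ln_norm_bound[of "lam/2"] lam by (simp add: norm_divide)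
  have pi1: "1 \<le> 2 * pi" using pi_gt3 by linarith
  have ceg0: "0 \<le> ceg" unfolding ceg_def by simp
  have ll0: "0 \<le> ll" unfolding ll_def by simp
  have X0: "0 \<le> X" unfolding X_def Bc_def using ll0 ceg0 pi_gt3 by simp
  have divle: "cmod (w / (2 * of_real pi)) \<le> cmod w" for w :: complex
  proof -
    have "cmod (w / (2 * of_real pi)) = cmod w / (2 * pi)" by (simp add: norm_divide norm_mult)
    also have "\<dots> \<le> cmod w" using pi1 by (simp add: divide_le_eq mult_le_cancel_left1 order_trans)
    finally show ?thesis .
  qed
  define T where "T = - (\<i>/4) + (LL + of_real (ln r) + euler_mascheroni) / (2 * of_real pi)"
  have Tb: "cmod T \<le> X - 1"
  proof -
    have a: "cmod T \<le> cmod (- (\<i>/4)) + cmod ((LL + of_real (ln r) + euler_mascheroni) / (2 * of_real pi))"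
      unfolding T_def by (rule norm_triangle_ineq)
    have b: "cmod ((LL + of_real (ln r) + euler_mascheroni) / (2 * of_real pi)) \<le> cmod (LL + of_real (ln r) + euler_mascheroni)"
      by (rule divle)
    have c: "cmod (- (\<i>/4)) = 1/4" by (simp add: norm_divide)
    have d: "cmod (LL + of_real (ln r) + euler_mascheroni) \<le> cmod LL + \<bar>ln r\<bar> + ceg"
      unfolding ceg_def using fwd_tri3[of LL "of_real (ln r)" euler_mascheroni] by simp
    show ?thesis using a b c d LLb unfolding X_def Bc_def ceg_def by linarith
  qed
  have E1: "cmod (F1 q - 1) \<le> exp 1 * cq" using F1_small[of q] cq cq1 by simp
  have E2: "cmod (F2 q) \<le> exp 1 * cq" using F2_small[of q] cq cq1 by simp
  have Eb: "cmod (Eent r lam) \<le> exp 1 * cq * X"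
  proof -
    have "Eent r lam = (F1 q - 1) * T + F2 q / (2 * of_real pi)"
      unfolding Eent_def T_def q_def LL_def by simp
    then have "cmod (Eent r lam) \<le> cmod (F1 q - 1) * cmod T + cmod (F2 q)"
      using norm_triangle_ineq[of "(F1 q - 1) * T" "F2 q / (2 * of_real pi)"] divle[of "F2 q"]
      by (simp add: norm_mult)
    also have "\<dots> \<le> exp 1 * cq * (X - 1) + exp 1 * cq"
      using E1 E2 Tb cq0 by (intro add_mono mult_mono) auto
    finally show ?thesis by (simp add: algebra_simps)
  qed
  have gb: "cmod (gfun lam) \<le> X"
  proof -
    have a: "cmod (gfun lam) \<le> cmod (- (1/(2 * of_real pi)) * LL) + cmod (\<i>/4) + cmod (euler_mascheroni/(2 * of_real pi) :: complex)"
      unfolding gfun_def LL_def by (rule fwd_tri)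
    have b: "cmod (- (1/(2 * of_real pi)) * LL) \<le> cmod LL"
      using divle[of LL] by (simp add: norm_mult norm_divide)
    have c: "cmod (euler_mascheroni/(2 * of_real pi) :: complex) \<le> ceg"
      using divle[of euler_mascheroni] unfolding ceg_def .
    have d: "cmod (\<i>/4) = 1/4" by (simp add: norm_divide)
    show ?thesis using a b c d LLb ceg0 abs_ge_zero[of "ln r"] unfolding X_def Bc_def ceg_def by linarith
  qed
  have "cmod (Eent r lam) * cmod (gfun lam) \<le> (exp 1 * cq * X) * X"
    using Eb gb X0 cq0 by (intro mult_mono) auto
  also have "\<dots> = exp 1 * (r^2/4) * (\<rho> * X)^2"
    unfolding cq_def by (simp add: power2_eq_square field_simps)
  also have "\<dots> \<le> exp 1 * (r^2/4) * (Bc r + 2)^2"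
  proof -
    have "\<rho> * ll \<le> \<rho> * (1 + 1/\<rho>)" unfolding ll_def
      using ln_small[OF \<rho>0] l1 \<rho>_def \<rho>0 by (intro mult_left_mono) auto
    also have "\<dots> = \<rho> + 1" using \<rho>0 by (simp add: field_simps)
    finally have a: "\<rho> * ll \<le> \<rho> + 1" .
    have B0: "0 \<le> Bc r" unfolding Bc_def using pi_gt3 by simp
    have b: "\<rho> * Bc r \<le> Bc r" using l1 \<rho>_def \<rho>0 B0 by (intro mult_left_le_one_le) auto
    have "\<rho> * X \<le> Bc r + 2" using a b l1 \<rho>_def unfolding X_def by (simp add: algebra_simps)
    moreover have "0 \<le> \<rho> * X" using \<rho>0 X0 by simp
    ultimately have "(\<rho> * X)^2 \<le> (Bc r + 2)^2" by (rule power_mono)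
    then show ?thesis by (intro mult_left_mono) auto
  qed
  finally show ?thesis .
qed

lemma Eent_ev: assumes r: "r > 0"
  shows "\<exists>K. eventually (\<lambda>lam. cmod (Eent r lam) * cmod (gfun lam) \<le> K) (at 0)"
proof (intro exI)
  show "eventually (\<lambda>lam. cmod (Eent r lam) * cmod (gfun lam) \<le> exp 1 * (r^2/4) * (Bc r + 2)^2) (at 0)"
    unfolding eventually_at
  proof (intro exI[of _ "min 1 (1/r)"] conjI ballI impI)
    show "0 < min 1 (1/r)" using r by simp
    fix lam :: complex assume h: "lam \<noteq> 0 \<and> dist lam 0 < min 1 (1/r)"
    then have l1: "cmod lam \<le> 1" and l2: "cmod lam < 1/r" by auto
    have "cmod lam * r \<le> 1" using l2 r by (simp add: field_simps)
    then show "cmod (Eent r lam) * cmod (gfun lam) \<le> exp 1 * (r^2/4) * (Bc r + 2)^2"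
      using Eent_pt[OF r _ l1] h by auto
  qed
qed

lemma g_large: "eventually (\<lambda>lam. M \<le> cmod (gfun lam)) (at 0)"
proof -
  define ceg where "ceg = cmod (euler_mascheroni :: complex)"
  define T where "T = 2 * pi * (\<bar>M\<bar> + 1/4) + ceg"
  have T0: "0 \<le> T" unfolding T_def ceg_def by simp
  show ?thesis unfolding eventually_at
  proof (intro exI[of _ "2 * exp (- T)"] conjI ballI impI)
    show "0 < 2 * exp (- T)" by simp
    fix lam :: complex assume h: "lam \<noteq> 0 \<and> dist lam 0 < 2 * exp (- T)"
    define \<rho> where "\<rho> = cmod lam"
    have \<rho>0: "0 < \<rho>" using h \<rho>_def by simp
    have "\<rho> / 2 < exp (- T)" using h \<rho>_def by simp
    then have "ln (\<rho>/2) < - T" using \<rho>0 by (metis divide_pos_pos exp_gt_zero ln_exp ln_less_cancel_iff zero_less_numeral)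
    then have lT: "T < \<bar>ln (\<rho>/2)\<bar>" by linarith
    define LL where "LL = Ln (lam / 2)"
    have "\<bar>ln (\<rho>/2)\<bar> = \<bar>Re LL\<bar>" unfolding LL_def \<rho>_def using h by (simp add: norm_divide)
    also have "\<dots> \<le> cmod LL" by (rule abs_Re_le_cmod)
    finally have LLb: "\<bar>ln (\<rho>/2)\<bar> \<le> cmod LL" .
    have pi0: "0 < pi" by simp
    have "cmod (- (1/(2 * of_real pi)) * LL) = cmod LL / (2 * pi)" by (simp add: norm_mult norm_divide)
    moreover have "cmod (euler_mascheroni/(2 * of_real pi) :: complex) = ceg / (2*pi)"
      unfolding ceg_def by (simp add: norm_divide norm_mult)
    moreover have "cmod (\<i>/4) = 1/4" by (simp add: norm_divide)
    moreover have "cmod (- (1/(2 * of_real pi)) * LL) - cmod (\<i>/4) - cmod (euler_mascheroni/(2 * of_real pi) :: complex)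
        \<le> cmod (gfun lam)"
      unfolding gfun_def LL_def by (rule rev_tri)
    ultimately have "cmod LL / (2 * pi) - 1/4 - ceg / (2*pi) \<le> cmod (gfun lam)" by simp
    moreover have "\<bar>M\<bar> \<le> cmod LL / (2 * pi) - 1/4 - ceg / (2*pi)"
    proof -
      have "T \<le> cmod LL" using lT LLb by linarith
      then have "T / (2*pi) \<le> cmod LL / (2*pi)" using pi0 by (simp add: divide_right_mono)
      moreover have "T / (2*pi) = \<bar>M\<bar> + 1/4 + ceg / (2*pi)" unfolding T_def using pi0 by (simp add: field_simps)
      ultimately show ?thesis by linarith
    qed
    ultimately show "M \<le> cmod (gfun lam)" by linarith
  qed
qed

lemma Emat_ev:
  fixes y :: "'n::finite \<Rightarrow> real^2"
  assumes y: "inj y"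
  shows "\<exists>K. eventually (\<lambda>lam. m1 (Emat y lam) * cmod (gfun lam) \<le> K) (at 0)"
proof -
  have "\<forall>p::'n\<times>'n. \<exists>K. eventually (\<lambda>lam. cmod (Emat y lam $ fst p $ snd p) * cmod (gfun lam) \<le> K) (at 0)"
  proof
    fix p :: "'n\<times>'n"
    obtain j k where p: "p = (j, k)" by (cases p)
    show "\<exists>K. eventually (\<lambda>lam. cmod (Emat y lam $ fst p $ snd p) * cmod (gfun lam) \<le> K) (at 0)"
    proof (cases "j = k")
      case True then show ?thesis using p by (intro exI[of _ 0]) (simp add: Emat_def)
    next
      case False
      then have "y j \<noteq> y k" using y by (meson injD)
      then have r: "dist (y j) (y k) > 0" by simp
      from Eent_ev[OF r] obtain K where "eventually (\<lambda>lam. cmod (Eent (dist (y j) (y k)) lam) * cmod (gfun lam) \<le> K) (at 0)" by blast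
      then show ?thesis using p False by (intro exI[of _ K]) (simp add: Emat_def)
    qed
  qed
  then obtain Kf where Kf: "\<And>p::'n\<times>'n. eventually (\<lambda>lam. cmod (Emat y lam $ fst p $ snd p) * cmod (gfun lam) \<le> Kf p) (at 0)"
    by metis
  have "eventually (\<lambda>lam. \<forall>p::'n\<times>'n. cmod (Emat y lam $ fst p $ snd p) * cmod (gfun lam) \<le> Kf p) (at 0)"
    by (rule eventually_all_finite) (rule Kf)
  then have "eventually (\<lambda>lam. m1 (Emat y lam) * cmod (gfun lam) \<le> (\<Sum>j\<in>UNIV. \<Sum>k\<in>UNIV. Kf (j,k))) (at 0)"
  proof (rule eventually_mono)
    fix lam assume h: "\<forall>p::'n\<times>'n. cmod (Emat y lam $ fst p $ snd p) * cmod (gfun lam) \<le> Kf p"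
    have "m1 (Emat y lam) * cmod (gfun lam) = (\<Sum>j\<in>UNIV. \<Sum>k\<in>UNIV. cmod (Emat y lam $ j $ k) * cmod (gfun lam))"
      unfolding m1_def by (simp add: sum_distrib_right)
    also have "\<dots> \<le> (\<Sum>j\<in>UNIV. \<Sum>k\<in>UNIV. Kf (j,k))"
      using h by (intro sum_mono) (metis fst_conv snd_conv)
    finally show "m1 (Emat y lam) * cmod (gfun lam) \<le> (\<Sum>j\<in>UNIV. \<Sum>k\<in>UNIV. Kf (j,k))" .
  qed
  then show ?thesis by blast
qed

lemma hankel_F: "hankel10 w = F1 ((w/2)^2) + \<i> * ((2 / of_real pi) * ((Ln (w/2) + euler_mascheroni) * F1 ((w/2)^2) + F2 ((w/2)^2)))"
  by (simp add: hankel10_def besselJ0_F1 besselY0_F)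

lemma Gamma_holo:
  fixes y :: "'n::finite \<Rightarrow> real^2"
  assumes y: "inj y"
  shows "(\<lambda>lam. GammaM y \<alpha> lam $ j $ k) holomorphic_on {z. 0 < Re z}"
proof (cases "j = k")
  case True
  have e: "(\<lambda>lam. GammaM y \<alpha> lam $ j $ k) = (\<lambda>lam. of_real (\<alpha> j) - (- (1/(2 * of_real pi)) * Ln (lam/2) + \<i>/4 - euler_mascheroni/(2 * of_real pi)))"
    using True by (simp add: GammaM_def gfun_def)
  show ?thesis unfolding e
    by (intro holomorphic_intros) (auto simp: complex_nonpos_Reals_iff)
next
  case False
  then have "y j \<noteq> y k" using y by (meson injD)
  then have r: "dist (y j) (y k) > 0" by simp
  define r where "r = dist (y j) (y k)"
  have e: "(\<lambda>lam. GammaM y \<alpha> lam $ j $ k) = (\<lambda>lam. - ((\<i>/4) * (F1 ((lam * of_real r/2)^2) + \<i> * ((2/of_real pi) *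
      ((Ln (lam * of_real r/2) + euler_mascheroni) * F1 ((lam * of_real r/2)^2) + F2 ((lam * of_real r/2)^2))))))"
    using False by (simp add: GammaM_def greenG_def hankel_F r_def dist_norm)
  have rr: "r > 0" using r r_def by simp
  show ?thesis unfolding e
    by (intro holomorphic_intros) (use rr in \<open>auto simp: complex_nonpos_Reals_iff mult_le_0_iff\<close>)
qed

lemma inv_entry:
  fixes A :: "complex^'n::finite^'n"
  assumes d0: "det A \<noteq> 0"
  shows "matrix_inv A $ i $ k = det (\<chi> p q. if q = i then (if p = k then 1 else 0) else A $ p $ q) / det A"
proof -
  have inv: "invertible A" using d0 invertible_det_nz by blast
  define b :: "complex^'n" where "b = (\<chi> p. if p = k then 1 else 0)"
  define x where "x = matrix_inv A *v b"
  have "A *v x = b" unfolding x_def using inv_both[OF inv] by (simp add: matrix_vector_mul_assoc)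
  then have "x = (\<chi> k. det(\<chi> i j. if j=k then b$i else A$i$j) / det A)" using cramer[OF d0] by blast
  then have "x $ i = det(\<chi> p q. if q=i then b$p else A$p$q) / det A" by simp
  moreover have "x $ i = matrix_inv A $ i $ k"
    unfolding x_def b_def matrix_vector_mult_def by (simp add: if_distrib[of "(*) _"] cong: if_cong)
  ultimately show ?thesis unfolding b_def by (simp cong: if_cong)
qed

lemma det_holo:
  fixes M :: "complex \<Rightarrow> complex^'n::finite^'n"
  assumes "\<And>i j. (\<lambda>z. M z $ i $ j) holomorphic_on S"
  shows "(\<lambda>z. det (M z)) holomorphic_on S"
  unfolding det_def by (intro holomorphic_intros assms)

lemma inv_holo:
  fixes M :: "complex \<Rightarrow> complex^'n::finite^'n"
  assumes h: "\<And>i j. (\<lambda>z. M z $ i $ j) holomorphic_on S"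
    and inv: "\<And>z. z \<in> S \<Longrightarrow> invertible (M z)"
  shows "(\<lambda>z. matrix_inv (M z) $ i $ k) holomorphic_on S"
proof -
  have d: "det (M z) \<noteq> 0" if "z \<in> S" for z using inv[OF that] invertible_det_nz by blast
  have hn: "(\<lambda>z. det (\<chi> p q. if q = i then (if p = k then 1 else 0) else M z $ p $ q)) holomorphic_on S"
  proof (rule det_holo)
    fix p q
    show "(\<lambda>z. (\<chi> p q. if q = i then (if p = k then 1 else 0) else M z $ p $ q) $ p $ q) holomorphic_on S"
      by (cases "q = i") (simp_all add: h)
  qed
  have "(\<lambda>z. det (\<chi> p q. if q = i then (if p = k then 1 else 0) else M z $ p $ q) / det (M z)) holomorphic_on S"
    by (intro holomorphic_on_divide hn det_holo h d)
  then show ?thesis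
    by (rule holomorphic_transform) (simp add: inv_entry d)
qed

lemma deriv_part:
  fixes F :: "complex \<Rightarrow> complex"
  assumes holo: "F holomorphic_on U" and U: "open U"
    and sub: "\<And>t. 0 < t \<Longrightarrow> t < lam0 \<Longrightarrow> cball (of_real t) (t/2) \<subseteq> U"
    and bnd: "\<And>z. z \<in> U \<Longrightarrow> cmod (F z) \<le> M"
  shows "\<forall>l t. 0 < t \<and> t < lam0 \<longrightarrow>
     ((rderiv ^^ l) (\<lambda>s. F (complex_of_real s)) has_vector_derivative (rderiv ^^ Suc l) (\<lambda>s. F (complex_of_real s)) t) (at t)
     \<and> cmod ((rderiv ^^ l) (\<lambda>s. F (complex_of_real s)) t) \<le> (fact l * M * 2^l) * t powi (- int l)"
proof -
  define g where "g = (\<lambda>s. F (complex_of_real s))"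
  define I where "I = {0<..<lam0}"
  have oI: "open I" unfolding I_def by simp
  have inU: "complex_of_real t \<in> U" if "t \<in> I" for t
    using sub[of t] that unfolding I_def by auto
  have hd: "(deriv ^^ l) F holomorphic_on U" for l by (rule holomorphic_higher_deriv[OF holo U])
  have vd: "((\<lambda>s. (deriv ^^ l) F (complex_of_real s)) has_vector_derivative (deriv ^^ Suc l) F (complex_of_real t)) (at t)"
    if "t \<in> I" for l t
  proof -
    have "((deriv ^^ l) F has_field_derivative deriv ((deriv ^^ l) F) (complex_of_real t)) (at (complex_of_real t))"
      by (rule holomorphic_derivI[OF hd U inU[OF that]])
    from has_vector_derivative_real_field[OF this, of UNIV] show ?thesis by simp
  qed
  have eq: "\<forall>t\<in>I. (rderiv ^^ l) g t = (deriv ^^ l) F (complex_of_real t)" for l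
  proof (induction l)
    case 0 then show ?case by (simp add: g_def)
  next
    case (Suc l)
    show ?case
    proof
      fix t assume t: "t \<in> I"
      have "((rderiv ^^ l) g has_vector_derivative (deriv ^^ Suc l) F (complex_of_real t)) (at t)"
        by (rule has_vector_derivative_transform_within_open[OF vd[OF t] oI t]) (use Suc in auto)
      then have "vector_derivative ((rderiv ^^ l) g) (at t) = (deriv ^^ Suc l) F (complex_of_real t)"
        by (rule vector_derivative_at)
      then show "(rderiv ^^ Suc l) g t = (deriv ^^ Suc l) F (complex_of_real t)"
        by (simp add: rderiv_def)
    qed
  qed
  show ?thesis
  proof (intro allI impI conjI)
    fix l t assume h: "0 < t \<and> t < lam0"
    then have t: "t \<in> I" unfolding I_def by simp
    have "((rderiv ^^ l) g has_vector_derivative (deriv ^^ Suc l) F (complex_of_real t)) (at t)"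
      by (rule has_vector_derivative_transform_within_open[OF vd[OF t] oI t]) (use eq in auto)
    then show "((rderiv ^^ l) (\<lambda>s. F (complex_of_real s)) has_vector_derivative (rderiv ^^ Suc l) (\<lambda>s. F (complex_of_real s)) t) (at t)"
      using eq[of "Suc l"] t unfolding g_def by simp
    have cb: "cball (complex_of_real t) (t/2) \<subseteq> U" using sub h by simp
    have "cmod ((deriv ^^ l) F (complex_of_real t)) \<le> fact l * M / (t/2)^l"
    proof (rule Cauchy_inequality)
      show "F holomorphic_on ball (complex_of_real t) (t/2)"
        by (rule holomorphic_on_subset[OF holo]) (use cb ball_subset_cball in blast)
      show "continuous_on (cball (complex_of_real t) (t/2)) F"
        by (rule holomorphic_on_imp_continuous_on, rule holomorphic_on_subset[OF holo cb])
      show "0 < t/2" using h by simp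
      fix x assume "cmod (complex_of_real t - x) = t/2"
      then have "x \<in> cball (complex_of_real t) (t/2)" by (simp add: dist_norm)
      then show "cmod (F x) \<le> M" using cb bnd by blast
    qed
    also have "fact l * M / (t/2)^l = (fact l * M * 2^l) * t powi (- int l)"
      using h by (simp add: power_int_minus power_divide field_simps)
    finally show "cmod ((rderiv ^^ l) (\<lambda>s. F (complex_of_real s)) t) \<le> (fact l * M * 2^l) * t powi (- int l)"
      using eq[of l] t unfolding g_def by simp
  qed
qed

lemma arith1:
  fixes e q d w k G n :: real
  assumes e: "0 \<le> e" and q: "0 \<le> q" and d: "0 \<le> d" and w: "0 \<le> w" and n: "1 \<le> n"
    and eG: "e * G \<le> k" and k: "0 \<le> k" and G: "2 * (k*q + (d+k)*w) + 1 \<le> G"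
  shows "e * q + (1/(G*n)) * ((d + e) * w) \<le> (k*q + (d+k)*w) / G"
    and "(k*q + (d+k)*w) / G \<le> 1/2"
    and "1/(G*n) \<le> 1/G"
proof -
  have C0: "0 \<le> k*q + (d+k)*w" using k q d w by simp
  have G1: "1 \<le> G" using G C0 by (smt (verit))
  have G0: "0 < G" using G1 by simp
  have ek: "e \<le> k / G" using eG G0 by (simp add: field_simps)
  have ek2: "e \<le> k" using eG G1 e by (metis mult_le_cancel_left1 order_trans not_le mult_le_cancel_right1 dual_order.trans)
  show gn: "1/(G*n) \<le> 1/G" using G0 n by (simp add: field_simps)
  have a: "e * q \<le> (k / G) * q" using ek q by (rule mult_right_mono)
  have b: "(1/(G*n)) * ((d + e) * w) \<le> (1/G) * ((d + k) * w)"
  proof (rule mult_mono[OF gn])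
    show "(d + e) * w \<le> (d + k) * w" using ek2 w by (intro mult_right_mono) auto
  qed (use G0 d e w in auto)
  have "e * q + (1/(G*n)) * ((d + e) * w) \<le> (k / G) * q + (1/G) * ((d + k) * w)" using a b by linarith
  also have "\<dots> = (k*q + (d+k)*w) / G" using G0 by (simp add: field_simps)
  finally show "e * q + (1/(G*n)) * ((d + e) * w) \<le> (k*q + (d+k)*w) / G" .
  show "(k*q + (d+k)*w) / G \<le> 1/2" using G G0 C0 by (simp add: field_simps)
qed

lemma fwd_ev:
  fixes y :: "'n::finite \<Rightarrow> real^2" and \<alpha> :: "'n \<Rightarrow> real"
  assumes y: "inj y" and ns: "nonsing_on_S (Sm ** Dtilde y \<alpha> ** Sm)"
  shows "\<exists>C \<delta>. \<delta> > 0 \<and> 0 \<le> C \<and> (\<forall>lam. lam \<noteq> 0 \<and> cmod lam < \<delta> \<longrightarrow>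
     invertible (GammaM y \<alpha> lam) \<and> 1 \<le> cmod (gfun lam) \<and>
     m1 (matrix_inv (GammaM y \<alpha> lam) - inv_on_S (Sm ** Dtilde y \<alpha> ** Sm)) \<le> C / cmod (gfun lam))"
proof -
  define D where "D = Dtilde y \<alpha>"
  define A where "A = Sm ** D ** Sm"
  define Q where "Q = inv_on_S A"
  have SA: "Sm ** A = A" unfolding A_def by (simp add: matrix_mul_assoc S_idem)
  have AS: "A ** Sm = A" unfolding A_def by (simp add: matrix_mul_assoc[symmetric] S_idem)
  have nsA: "nonsing_on_S A" using ns unfolding A_def D_def .
  from inv_props[OF SA AS nsA] have SQ: "Sm ** Q = Q" and PQ: "Pm ** Q = 0" and AQ: "A ** Q = Sm"
    unfolding Q_def by auto
  from Emat_ev[OF y] obtain K where evE: "eventually (\<lambda>lam. m1 (Emat y lam) * cmod (gfun lam) \<le> K) (at 0)" by blast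
  define k where "k = \<bar>K\<bar>"
  define w where "w = m1 (Pm::complex^'n^'n) + m1 (Pm::complex^'n^'n) * m1 D * m1 Q"
  define q where "q = m1 Q"
  define d where "d = m1 D"
  define C1 where "C1 = k*q + (d+k)*w"
  define n where "n = real CARD('n)"
  have k0: "0 \<le> k" unfolding k_def by simp
  have w0: "0 \<le> w" unfolding w_def by (intro add_nonneg_nonneg mult_nonneg_nonneg m1_nonneg)
  have q0: "0 \<le> q" unfolding q_def by (rule m1_nonneg)
  have d0: "0 \<le> d" unfolding d_def by (rule m1_nonneg)
  have n1: "1 \<le> n" unfolding n_def by (simp add: Suc_le_eq)
  have C10: "0 \<le> C1" unfolding C1_def using k0 q0 d0 w0 by simp
  have "eventually (\<lambda>lam. m1 (Emat y lam) * cmod (gfun lam) \<le> K \<and> 2 * C1 + 1 \<le> cmod (gfun lam)) (at 0)"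
    by (rule eventually_conj[OF evE g_large])
  then obtain \<delta> where \<delta>: "\<delta> > 0" and h\<delta>: "\<And>lam. lam \<noteq> 0 \<Longrightarrow> dist lam 0 < \<delta> \<Longrightarrow>
      m1 (Emat y lam) * cmod (gfun lam) \<le> K \<and> 2 * C1 + 1 \<le> cmod (gfun lam)"
    unfolding eventually_at by auto
  show ?thesis
  proof (intro exI conjI allI impI)
    show "0 < \<delta>" by (rule \<delta>)
    show "0 \<le> 2 * n * (q * C1 + w)" using n1 q0 C10 w0 by simp
    fix lam :: complex assume h: "lam \<noteq> 0 \<and> cmod lam < \<delta>"
    then have hh: "m1 (Emat y lam) * cmod (gfun lam) \<le> K" "2 * C1 + 1 \<le> cmod (gfun lam)" using h\<delta> by auto
    define G where "G = cmod (gfun lam)"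
    define e where "e = m1 (Emat y lam)"
    have G1: "1 \<le> G" using hh C10 unfolding G_def by linarith
    then show "1 \<le> cmod (gfun lam)" unfolding G_def .
    have g0: "gfun lam \<noteq> 0" using G1 unfolding G_def by auto
    define c where "c = gfun lam * of_nat CARD('n)"
    have c0: "c \<noteq> 0" unfolding c_def using g0 by simp
    have cc: "cmod (1/c) = 1/(G*n)" unfolding c_def G_def n_def by (simp add: norm_divide norm_mult)
    have ar: "e * q + (1/(G*n)) * ((d + e) * w) \<le> C1 / G" "C1 / G \<le> 1/2" "1/(G*n) \<le> 1/G"
      using arith1[of e q d w n G k] m1_nonneg[of "Emat y lam"] q0 d0 w0 n1 hh k0
      unfolding e_def G_def C1_def k_def by auto
    have dec: "GammaM y \<alpha> lam = D + Emat y lam - sm c Pm"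
      unfolding D_def c_def using Gamma_decomp[OF y] h by blast
    have small: "m1 (Emat y lam) * m1 Q + cmod (1/c) * ((m1 D + m1 (Emat y lam)) * (m1 (Pm::complex^'n^'n) + m1 (Pm::complex^'n^'n) * m1 D * m1 Q)) \<le> 1/2"
      using ar(1,2) unfolding cc e_def q_def d_def w_def by linarith
    have AQ': "(Sm ** D ** Sm) ** Q = Sm" using AQ unfolding A_def .
    from fwd_main[OF c0 SQ PQ AQ' small]
    have inv: "invertible (D + Emat y lam - sm c Pm)" and
      bnd: "m1 (matrix_inv (D + Emat y lam - sm c Pm) - Q) \<le> 2 * of_nat CARD('n) *
          (m1 Q * (m1 (Emat y lam) * m1 Q + cmod (1/c) * ((m1 D + m1 (Emat y lam)) * (m1 (Pm::complex^'n^'n) + m1 (Pm::complex^'n^'n) * m1 D * m1 Q)))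
           + cmod (1/c) * (m1 (Pm::complex^'n^'n) + m1 (Pm::complex^'n^'n) * m1 D * m1 Q))" by auto
    show "invertible (GammaM y \<alpha> lam)" using inv dec by simp
    have "2 * n * (q * (e * q + (1/(G*n)) * ((d + e) * w)) + (1/(G*n)) * w) \<le> 2 * n * (q * (C1 / G) + (1/G) * w)"
    proof -
      have "q * (e * q + (1/(G*n)) * ((d + e) * w)) \<le> q * (C1 / G)" using ar(1) q0 by (rule mult_left_mono)
      moreover have "(1/(G*n)) * w \<le> (1/G) * w" using ar(3) w0 by (rule mult_right_mono)
      ultimately show ?thesis using n1 by simp
    qed
    also have "\<dots> = 2 * n * (q * C1 + w) / G" using G1 by (simp add: field_simps)
    finally have fin: "2 * n * (q * (e * q + (1/(G*n)) * ((d + e) * w)) + (1/(G*n)) * w) \<le> 2 * n * (q * C1 + w) / G" .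
    show "m1 (matrix_inv (GammaM y \<alpha> lam) - inv_on_S (Sm ** Dtilde y \<alpha> ** Sm)) \<le> 2 * n * (q * C1 + w) / cmod (gfun lam)"
      using bnd[unfolded cc] fin unfolding dec e_def G_def q_def d_def w_def n_def Q_def A_def D_def by simp
  qed
qed

lemma arith2:
  fixes a e p d M Cn k G :: real
  assumes a0: "0 \<le> a" and aG: "a \<le> 1/G" and e0: "0 \<le> e" and eG: "e * G \<le> k" and k0: "0 \<le> k"
    and p0: "0 \<le> p" and d0: "0 \<le> d" and M0: "0 \<le> M" and MC: "M \<le> Cn"
    and G: "2 * (p*d + Cn*(k + (d+k)*p*d)) + 1 \<le> G"
  shows "a*p*d + M*(e + a*(d+e)*p*d) \<le> 1/2"
proof -
  have Cn0: "0 \<le> Cn" using M0 MC by simp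
  have C30: "0 \<le> p*d + Cn*(k + (d+k)*p*d)" using p0 d0 Cn0 k0 by simp
  have G1: "1 \<le> G" using G C30 by (smt (verit))
  have G0: "0 < G" using G1 by simp
  have ek: "e \<le> k / G" using eG G0 by (simp add: field_simps)
  have ek2: "k / G \<le> k" using G1 k0 by (simp add: divide_le_eq mult_le_cancel_left1 order_trans)
  have pd0: "0 \<le> p * d" using p0 d0 by simp
  have a1: "a*p*d \<le> (1/G)*p*d" using aG pd0 by (metis mult.assoc mult_right_mono)
  have de: "d + e \<le> d + k" using ek ek2 by linarith
  have a2: "a*(d+e)*p*d \<le> (1/G)*(d+k)*p*d"
  proof -
    have "a*(d+e) \<le> (1/G)*(d+k)" using aG de a0 d0 e0 G0 by (intro mult_mono) auto
    then show ?thesis using pd0 by (metis mult.assoc mult_right_mono)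
  qed
  have a3: "e + a*(d+e)*p*d \<le> (k + (d+k)*p*d) / G" using ek a2 G0 by (simp add: field_simps)
  have a4: "0 \<le> e + a*(d+e)*p*d" using e0 a0 d0 p0 by simp
  have "M*(e + a*(d+e)*p*d) \<le> Cn * ((k + (d+k)*p*d) / G)" using MC a3 a4 Cn0 by (intro mult_mono) auto
  then have "a*p*d + M*(e + a*(d+e)*p*d) \<le> (1/G)*p*d + Cn * ((k + (d+k)*p*d) / G)" using a1 by linarith
  also have "\<dots> = (p*d + Cn*(k + (d+k)*p*d)) / G" using G0 by (simp add: field_simps)
  also have "\<dots> \<le> 1/2" using G G0 C30 by (simp add: field_simps)
  finally show ?thesis .
qed

lemma v1_eq0: "v1 (v::complex^'n::finite) \<le> 0 \<Longrightarrow> v = 0"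
proof -
  assume h: "v1 v \<le> 0"
  have "\<forall>i. cmod (v $ i) = 0"
  proof
    fix i
    have "cmod (v $ i) \<le> v1 v" by (rule v1_entry)
    then show "cmod (v $ i) = 0" using h norm_ge_zero[of "v $ i"] by linarith
  qed
  then show "v = 0" by (simp add: vec_eq_iff)
qed

lemma bwd_ev:
  fixes y :: "'n::finite \<Rightarrow> real^2" and \<alpha> :: "'n \<Rightarrow> real"
  assumes y: "inj y"
    and bd: "\<exists>C \<delta>. \<delta> > 0 \<and> (\<forall>lam\<in>cuhp0. cmod lam < \<delta> \<longrightarrow>
              invertible (GammaM y \<alpha> lam) \<and> norm (matrix_inv (GammaM y \<alpha> lam)) \<le> C)"
  shows "nonsing_on_S (Sm ** Dtilde y \<alpha> ** Sm)"
proof (rule ccontr)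
  assume "\<not> nonsing_on_S (Sm ** Dtilde y \<alpha> ** Sm)"
  then obtain v where Sv: "Sm *v v = v" and Av: "(Sm ** Dtilde y \<alpha> ** Sm) *v v = 0" and v0: "v \<noteq> 0"
    unfolding nonsing_on_S_def by blast
  obtain C \<delta> where \<delta>: "\<delta> > 0" and hC: "\<And>lam. lam \<in> cuhp0 \<Longrightarrow> cmod lam < \<delta> \<Longrightarrow>
      invertible (GammaM y \<alpha> lam) \<and> norm (matrix_inv (GammaM y \<alpha> lam)) \<le> C" using bd by blast
  define D where "D = Dtilde y \<alpha>"
  from Emat_ev[OF y] obtain K where evE: "eventually (\<lambda>lam. m1 (Emat y lam) * cmod (gfun lam) \<le> K) (at 0)" by blast
  define k where "k = \<bar>K\<bar>"
  define n where "n = real CARD('n)"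
  define p where "p = m1 (Pm :: complex^'n^'n)"
  define d where "d = m1 D"
  define Cn where "Cn = n * n * \<bar>C\<bar>"
  define C3 where "C3 = p*d + Cn*(k + (d+k)*p*d)"
  have "eventually (\<lambda>lam. m1 (Emat y lam) * cmod (gfun lam) \<le> K \<and> 2 * C3 + 1 \<le> cmod (gfun lam)) (at 0)"
    by (rule eventually_conj[OF evE g_large])
  then obtain \<delta>' where \<delta>': "\<delta>' > 0" and h\<delta>: "\<And>lam. lam \<noteq> 0 \<Longrightarrow> dist lam 0 < \<delta>' \<Longrightarrow>
      m1 (Emat y lam) * cmod (gfun lam) \<le> K \<and> 2 * C3 + 1 \<le> cmod (gfun lam)"
    unfolding eventually_at by auto
  define lam where "lam = complex_of_real (min \<delta> \<delta>' / 2)"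
  have lam0: "lam \<noteq> 0" unfolding lam_def using \<delta> \<delta>' by simp
  have lamd: "cmod lam < \<delta>" "cmod lam < \<delta>'" unfolding lam_def using \<delta> \<delta>' by auto
  have lamc: "lam \<in> cuhp0" unfolding cuhp0_def lam_def using lam0 lam_def by simp
  from hC[OF lamc lamd(1)] have inv: "invertible (GammaM y \<alpha> lam)"
    and nC: "norm (matrix_inv (GammaM y \<alpha> lam)) \<le> C" by auto
  from h\<delta>[OF lam0] lamd(2) have hh: "m1 (Emat y lam) * cmod (gfun lam) \<le> K" "2 * C3 + 1 \<le> cmod (gfun lam)" by auto
  have C30: "0 \<le> C3" unfolding C3_def Cn_def p_def d_def k_def n_def by (intro add_nonneg_nonneg mult_nonneg_nonneg m1_nonneg) auto
  have G1: "1 \<le> cmod (gfun lam)" using hh C30 by linarith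
  define c where "c = gfun lam * of_nat CARD('n)"
  have c0: "c \<noteq> 0" unfolding c_def using G1 by auto
  have dec: "GammaM y \<alpha> lam = D + Emat y lam - sm c Pm"
    unfolding D_def c_def using Gamma_decomp[OF y lam0] by blast
  have Av': "(Sm ** D ** Sm) *v v = 0" using Av unfolding D_def .
  have inv': "invertible (D + Emat y lam - sm c Pm)" using inv dec by simp
  have main: "v1 v \<le> v1 v * (cmod (1/c) * m1 (Pm::complex^'n^'n) * m1 D + m1 (matrix_inv (D + Emat y lam - sm c Pm)) *
           (m1 (Emat y lam) + cmod (1/c) * (m1 D + m1 (Emat y lam)) * m1 (Pm::complex^'n^'n) * m1 D))"
    by (rule bwd_main[OF c0 Sv Av' inv'])
  have cc: "cmod (1/c) \<le> 1 / cmod (gfun lam)"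
  proof -
    have "cmod (1/c) = 1 / (cmod (gfun lam) * n)" unfolding c_def n_def by (simp add: norm_divide norm_mult)
    also have "\<dots> \<le> 1 / cmod (gfun lam)"
    proof (rule divide_left_mono)
      have n1: "1 \<le> n" unfolding n_def by (simp add: Suc_le_eq)
      show "cmod (gfun lam) \<le> cmod (gfun lam) * n" using n1 G1 by (simp add: mult_le_cancel_left1)
      show "0 < cmod (gfun lam) * n * cmod (gfun lam)" using n1 G1 by (intro mult_pos_pos) auto
    qed simp
    finally show ?thesis .
  qed
  have MC: "m1 (matrix_inv (D + Emat y lam - sm c Pm)) \<le> Cn"
  proof -
    have "m1 (matrix_inv (D + Emat y lam - sm c Pm)) \<le> n * n * norm (matrix_inv (D + Emat y lam - sm c Pm))"
      unfolding n_def by (rule m1_le_norm)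
    also have "\<dots> \<le> n * n * \<bar>C\<bar>" using nC dec by (intro mult_left_mono) (auto simp: n_def)
    finally show ?thesis unfolding Cn_def .
  qed
  have Y: "cmod (1/c) * m1 (Pm::complex^'n^'n) * m1 D + m1 (matrix_inv (D + Emat y lam - sm c Pm)) *
           (m1 (Emat y lam) + cmod (1/c) * (m1 D + m1 (Emat y lam)) * m1 (Pm::complex^'n^'n) * m1 D) \<le> 1/2"
    using arith2[of "cmod (1/c)" "cmod (gfun lam)" "m1 (Emat y lam)" k p d "m1 (matrix_inv (D + Emat y lam - sm c Pm))" Cn]
      cc hh MC m1_nonneg[of "Emat y lam"] m1_nonneg[of "matrix_inv (D + Emat y lam - sm c Pm)"]
    unfolding p_def d_def k_def C3_def by (auto simp: m1_nonneg)
  have "v1 v \<le> v1 v * (1/2)" using main mult_left_mono[OF Y v1_nonneg[of v]] by linarith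
  then have "v1 v \<le> 0" by simp
  then have "v = 0" by (rule v1_eq0)
  then show False using v0 by simp
qed

theorem mainTheorem8:
  fixes y :: "'n::finite \<Rightarrow> real^2" and \<alpha> :: "'n \<Rightarrow> real"
  assumes "inj y"
  shows "((\<exists>C \<delta>. \<delta> > 0 \<and> (\<forall>lam\<in>cuhp0. cmod lam < \<delta> \<longrightarrow>
              invertible (GammaM y \<alpha> lam) \<and> norm (matrix_inv (GammaM y \<alpha> lam)) \<le> C))
          \<longleftrightarrow> nonsing_on_S (Sm ** Dtilde y \<alpha> ** Sm))
       \<and> (nonsing_on_S (Sm ** Dtilde y \<alpha> ** Sm) \<longrightarrow>
            (\<exists>C \<delta>. \<delta> > 0 \<and> (\<forall>lam\<in>cuhp0. cmod lam < \<delta> \<longrightarrow>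
                norm (matrix_inv (GammaM y \<alpha> lam) - inv_on_S (Sm ** Dtilde y \<alpha> ** Sm))
                  \<le> C / cmod (gfun lam)))
          \<and> (\<exists>lam0 > 0. \<exists>C :: nat \<Rightarrow> real. \<forall>l j k. \<forall>t. 0 < t \<and> t < lam0 \<longrightarrow>
                ((rderiv ^^ l) (\<lambda>s. matrix_inv (GammaM y \<alpha> (complex_of_real s)) $ j $ k)
                   has_vector_derivative
                 (rderiv ^^ Suc l) (\<lambda>s. matrix_inv (GammaM y \<alpha> (complex_of_real s)) $ j $ k) t) (at t)
                \<and> cmod ((rderiv ^^ l) (\<lambda>s. matrix_inv (GammaM y \<alpha> (complex_of_real s)) $ j $ k) t)
                    \<le> C l * t powi (- int l)))"
proof -
  define A where "A = Sm ** Dtilde y \<alpha> ** Sm"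
  define Q where "Q = inv_on_S A"
  have fwdb: "nonsing_on_S A \<Longrightarrow> \<exists>C \<delta>. \<delta> > 0 \<and> 0 \<le> C \<and> (\<forall>lam. lam \<noteq> 0 \<and> cmod lam < \<delta> \<longrightarrow>
     invertible (GammaM y \<alpha> lam) \<and> 1 \<le> cmod (gfun lam) \<and>
     m1 (matrix_inv (GammaM y \<alpha> lam) - Q) \<le> C / cmod (gfun lam))"
    unfolding A_def Q_def by (rule fwd_ev[OF assms])
  have bound: "\<exists>M \<delta>. \<delta> > 0 \<and> (\<forall>lam. lam \<noteq> 0 \<and> cmod lam < \<delta> \<longrightarrow>
     invertible (GammaM y \<alpha> lam) \<and> m1 (matrix_inv (GammaM y \<alpha> lam)) \<le> M)" if ns: "nonsing_on_S A"
  proof -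
    obtain C \<delta> where \<delta>: "\<delta> > 0" and C0: "0 \<le> C" and h: "\<And>lam. lam \<noteq> 0 \<Longrightarrow> cmod lam < \<delta> \<Longrightarrow>
     invertible (GammaM y \<alpha> lam) \<and> 1 \<le> cmod (gfun lam) \<and>
     m1 (matrix_inv (GammaM y \<alpha> lam) - Q) \<le> C / cmod (gfun lam)" using fwdb[OF ns] by blast
    show ?thesis
    proof (intro exI conjI allI impI)
      show "0 < \<delta>" by (rule \<delta>)
      fix lam :: complex assume l: "lam \<noteq> 0 \<and> cmod lam < \<delta>"
      then have hl: "invertible (GammaM y \<alpha> lam)" "1 \<le> cmod (gfun lam)"
        "m1 (matrix_inv (GammaM y \<alpha> lam) - Q) \<le> C / cmod (gfun lam)" using h by auto
      show "invertible (GammaM y \<alpha> lam)" by (rule hl(1))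
      have "C / cmod (gfun lam) \<le> C" using hl(2) C0 by (simp add: divide_le_eq mult_le_cancel_left1)
      then have "m1 (matrix_inv (GammaM y \<alpha> lam) - Q) \<le> C" using hl(3) by linarith
      moreover have "m1 (matrix_inv (GammaM y \<alpha> lam)) \<le> m1 (matrix_inv (GammaM y \<alpha> lam) - Q) + m1 Q"
        using m1_add[of "matrix_inv (GammaM y \<alpha> lam) - Q" Q] by simp
      ultimately show "m1 (matrix_inv (GammaM y \<alpha> lam)) \<le> C + m1 Q" by linarith
    qed
  qed
  have iff: "(\<exists>C \<delta>. \<delta> > 0 \<and> (\<forall>lam\<in>cuhp0. cmod lam < \<delta> \<longrightarrow>
              invertible (GammaM y \<alpha> lam) \<and> norm (matrix_inv (GammaM y \<alpha> lam)) \<le> C))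
          \<longleftrightarrow> nonsing_on_S (Sm ** Dtilde y \<alpha> ** Sm)"
  proof
    assume "\<exists>C \<delta>. \<delta> > 0 \<and> (\<forall>lam\<in>cuhp0. cmod lam < \<delta> \<longrightarrow>
              invertible (GammaM y \<alpha> lam) \<and> norm (matrix_inv (GammaM y \<alpha> lam)) \<le> C)"
    then show "nonsing_on_S (Sm ** Dtilde y \<alpha> ** Sm)" by (rule bwd_ev[OF assms])
  next
    assume "nonsing_on_S (Sm ** Dtilde y \<alpha> ** Sm)"
    then obtain M \<delta> where \<delta>: "\<delta> > 0" and h: "\<And>lam. lam \<noteq> 0 \<Longrightarrow> cmod lam < \<delta> \<Longrightarrow>
     invertible (GammaM y \<alpha> lam) \<and> m1 (matrix_inv (GammaM y \<alpha> lam)) \<le> M" using bound unfolding A_def by blast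
    show "\<exists>C \<delta>. \<delta> > 0 \<and> (\<forall>lam\<in>cuhp0. cmod lam < \<delta> \<longrightarrow>
              invertible (GammaM y \<alpha> lam) \<and> norm (matrix_inv (GammaM y \<alpha> lam)) \<le> C)"
    proof (intro exI conjI ballI impI)
      show "0 < \<delta>" by (rule \<delta>)
      fix lam assume "lam \<in> cuhp0" "cmod lam < \<delta>"
      then have "lam \<noteq> 0" "cmod lam < \<delta>" unfolding cuhp0_def by auto
      then have hl: "invertible (GammaM y \<alpha> lam)" "m1 (matrix_inv (GammaM y \<alpha> lam)) \<le> M" using h by auto
      show "invertible (GammaM y \<alpha> lam)" by (rule hl(1))
      show "norm (matrix_inv (GammaM y \<alpha> lam)) \<le> M" using norm_le_m1 hl(2) order_trans by blast
    qed
  qed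
  have second: "(\<exists>C \<delta>. \<delta> > 0 \<and> (\<forall>lam\<in>cuhp0. cmod lam < \<delta> \<longrightarrow>
                norm (matrix_inv (GammaM y \<alpha> lam) - inv_on_S (Sm ** Dtilde y \<alpha> ** Sm))
                  \<le> C / cmod (gfun lam)))
          \<and> (\<exists>lam0 > 0. \<exists>C :: nat \<Rightarrow> real. \<forall>l j k. \<forall>t. 0 < t \<and> t < lam0 \<longrightarrow>
                ((rderiv ^^ l) (\<lambda>s. matrix_inv (GammaM y \<alpha> (complex_of_real s)) $ j $ k)
                   has_vector_derivative
                 (rderiv ^^ Suc l) (\<lambda>s. matrix_inv (GammaM y \<alpha> (complex_of_real s)) $ j $ k) t) (at t)
                \<and> cmod ((rderiv ^^ l) (\<lambda>s. matrix_inv (GammaM y \<alpha> (complex_of_real s)) $ j $ k) t)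
                    \<le> C l * t powi (- int l))"
    if ns0: "nonsing_on_S (Sm ** Dtilde y \<alpha> ** Sm)"
  proof
    have ns: "nonsing_on_S A" using ns0 unfolding A_def .
    obtain C \<delta> where \<delta>: "\<delta> > 0" and h: "\<And>lam. lam \<noteq> 0 \<Longrightarrow> cmod lam < \<delta> \<Longrightarrow>
     invertible (GammaM y \<alpha> lam) \<and> 1 \<le> cmod (gfun lam) \<and>
     m1 (matrix_inv (GammaM y \<alpha> lam) - Q) \<le> C / cmod (gfun lam)" using fwdb[OF ns] by blast
    show "\<exists>C \<delta>. \<delta> > 0 \<and> (\<forall>lam\<in>cuhp0. cmod lam < \<delta> \<longrightarrow>
                norm (matrix_inv (GammaM y \<alpha> lam) - inv_on_S (Sm ** Dtilde y \<alpha> ** Sm))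
                  \<le> C / cmod (gfun lam))"
    proof (intro exI conjI ballI impI)
      show "0 < \<delta>" by (rule \<delta>)
      fix lam assume "lam \<in> cuhp0" "cmod lam < \<delta>"
      then have "lam \<noteq> 0" "cmod lam < \<delta>" unfolding cuhp0_def by auto
      then have "m1 (matrix_inv (GammaM y \<alpha> lam) - Q) \<le> C / cmod (gfun lam)" using h by auto
      then show "norm (matrix_inv (GammaM y \<alpha> lam) - inv_on_S (Sm ** Dtilde y \<alpha> ** Sm)) \<le> C / cmod (gfun lam)"
        using norm_le_m1 order_trans unfolding Q_def A_def by blast
    qed
    obtain M \<delta> where \<delta>: "\<delta> > 0" and hM: "\<And>lam. lam \<noteq> 0 \<Longrightarrow> cmod lam < \<delta> \<Longrightarrow>
     invertible (GammaM y \<alpha> lam) \<and> m1 (matrix_inv (GammaM y \<alpha> lam)) \<le> M" using bound[OF ns] by blast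
    define U where "U = {z. 0 < Re z} \<inter> ball 0 \<delta>"
    have oU: "open U" unfolding U_def by (intro open_Int open_halfspace_Re_gt open_ball)
    have Unz: "z \<noteq> 0 \<and> cmod z < \<delta>" if "z \<in> U" for z using that unfolding U_def by auto
    have sub: "cball (complex_of_real t) (t/2) \<subseteq> U" if t: "0 < t" "t < \<delta>/2" for t
    proof
      fix z assume "z \<in> cball (complex_of_real t) (t/2)"
      then have dz: "cmod (complex_of_real t - z) \<le> t/2" by (simp add: dist_norm)
      have "\<bar>Re (complex_of_real t - z)\<bar> \<le> t/2" using abs_Re_le_cmod dz order_trans by blast
      then have "Re (complex_of_real t - z) \<le> t/2" using abs_ge_self order_trans by blast
      then have "0 < Re z" using t by simp
      moreover have "cmod z \<le> cmod (complex_of_real t) + cmod (complex_of_real t - z)"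
        using norm_triangle_ineq4[of "complex_of_real t" "complex_of_real t - z"] by simp
      then have "cmod z < \<delta>" using dz t by simp
      ultimately show "z \<in> U" unfolding U_def by simp
    qed
    show "\<exists>lam0 > 0. \<exists>C :: nat \<Rightarrow> real. \<forall>l j k. \<forall>t. 0 < t \<and> t < lam0 \<longrightarrow>
                ((rderiv ^^ l) (\<lambda>s. matrix_inv (GammaM y \<alpha> (complex_of_real s)) $ j $ k)
                   has_vector_derivative
                 (rderiv ^^ Suc l) (\<lambda>s. matrix_inv (GammaM y \<alpha> (complex_of_real s)) $ j $ k) t) (at t)
                \<and> cmod ((rderiv ^^ l) (\<lambda>s. matrix_inv (GammaM y \<alpha> (complex_of_real s)) $ j $ k) t)
                    \<le> C l * t powi (- int l)"
    proof (intro exI[of _ "\<delta>/2"] conjI exI[of _ "\<lambda>l. fact l * M * 2^l"] allI impI)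
      show "0 < \<delta>/2" using \<delta> by simp
      fix l j k t assume ht: "0 < t \<and> t < \<delta>/2"
      have holo: "(\<lambda>z. matrix_inv (GammaM y \<alpha> z) $ j $ k) holomorphic_on U"
      proof (rule inv_holo)
        fix i j'
        show "(\<lambda>z. GammaM y \<alpha> z $ i $ j') holomorphic_on U"
          by (rule holomorphic_on_subset[OF Gamma_holo[OF assms]]) (auto simp: U_def)
      next
        fix z assume "z \<in> U" then show "invertible (GammaM y \<alpha> z)" using hM Unz by blast
      qed
      have bnd: "cmod (matrix_inv (GammaM y \<alpha> z) $ j $ k) \<le> M" if "z \<in> U" for z
        using m1_entry[of "matrix_inv (GammaM y \<alpha> z)" j k] hM[of z] Unz[OF that] by auto
      from deriv_part[of "\<lambda>z. matrix_inv (GammaM y \<alpha> z) $ j $ k" U "\<delta>/2" M, OF holo oU sub bnd] ht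
      show "((rderiv ^^ l) (\<lambda>s. matrix_inv (GammaM y \<alpha> (complex_of_real s)) $ j $ k) has_vector_derivative
                 (rderiv ^^ Suc l) (\<lambda>s. matrix_inv (GammaM y \<alpha> (complex_of_real s)) $ j $ k) t) (at t)"
        and "cmod ((rderiv ^^ l) (\<lambda>s. matrix_inv (GammaM y \<alpha> (complex_of_real s)) $ j $ k) t)
                    \<le> fact l * M * 2^l * t powi (- int l)" by auto
    qed
  qed
  show ?thesis using iff second by blast
qed

end
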